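(* Let $E=\prod_{i=1}^n\mathbb R^{p_i}$ and $Q=\prod_iQ_i$, where for each block $i$ one of the following setups is used: (Euclidean) $Q_i\subseteq\mathbb R^{p_i}$ is closed convex, $\|x^{(i)}\|_i^2=\langle B_ix^{(i)},x^{(i)}\rangle$ with $B_i$ symmetric positive definite, $d_i=\frac12\|\cdot\|_i^2$, $V_i[z](x)=\frac12\|x-z\|_i^2$; or (entropy) $Q_i=\{x\in\mathbb R^{p_i}_+:\sum_jx_j=1\}$, $\|\cdot\|_i=\|\cdot\|_1$, $d_i(x)=\sum_jx_j\ln x_j$, $V_i[z](x)=\sum_jx_j\ln\frac{x_j}{z_j}$. Let $f$ be convex and differentiable with block-wise Lipschitz gradient: $\|U_i^T\nabla f(x+U_ih)-U_i^T\nabla f(x)\|_{i,*}\le L_i\|h\|_i$ for all $i$, $x\in Q$, $h\in\mathbb R^{p_i}$ with $x+U_ih\in Q$; let $L_0=\min_iL_i$, and let $x_*$ minimize $f$ on $Q$, $f_*=f(x_* )$. Apply RSTM (see context) with $\rho=n$, $V[z](x)=\sum_iL_iV_i[z^{(i)}](x^{(i)})$, $u_0$ in the relative interior of $Q$ for entropy blocks, and oracle $G(x)=n\widetilde U_i(U_i^T\nabla f(x)+\xi(x))$ with $i$ uniform on $\{1,\dots,n\}$ and $\|\xi(x)\|_{i,*}\le\Delta$ for all $x\in Q$. Let $P_0^2=(1-\frac1n)(f(x_0)-f_* )+V[u_0](x_* )$. (1) Fix $k\ge1$. If at all iterations up to $k$ the error level satisfies $\Delta\le\frac{P_0\sqrt{L_0}}{4nA_k}$,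 then $\mathbb Ef(x_k)-f_*\le\frac{6n^2P_0^2}{(k-1+2n)^2}$. (2) In general, for all $k\ge1$, $\mathbb Ef(x_k)-f_*\le\frac{8n^2P_0^2}{(k-1+2n)^2}+\frac4{L_0}(k-1+2n)^2\Delta^2$.
   Context: $U_i:\mathbb R^{p_i}\to E$ embeds a vector as the $i$-th block (others zero); $U_i^T:E^*\to(\mathbb R^{p_i})^*$ extracts the $i$-th block of a dual vector; $\widetilde U_i$ embeds a dual vector of block $i$ into $E^*$. $\|\cdot\|_{i,*}$ is the dual norm of $\|\cdot\|_i$. RSTM with parameter $\rho\ge1$, feasible set $Q$, Bregman divergence $V[\cdot](\cdot)$ and random oracle $G$ (a random vector in $E^*$ for each query point, sampled afresh and independently of the past at each call): choose $u_0\in Q$, set $A_0=\alpha_0=1-\frac1\rho$, $x_0=y_0=u_0$; for $k\ge0$, $\alpha_{k+1}$ is the largest root of $A_k+\alpha_{k+1}=\rho^2\alpha_{k+1}^2$, $A_{k+1}=A_k+\alpha_{k+1}$, $y_{k+1}=\frac{\alpha_{k+1}u_k+A_kx_k}{A_{k+1}}$, $u_{k+1}=\arg\min_{x\in Q}\{V[u_k](x)+\alpha_{k+1}\langle G(y_{k+1}),x\rangle\}$, $x_{k+1}=y_{k+1}+\rho\frac{\alpha_{k+1}}{A_{k+1}}(u_{k+1}-u_k)$. $\mathbb E$ is the expectation over all randomness up to iteration $k$. *)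

theory Defs
  imports "HOL-Analysis.Analysis" "HOL-Probability.Product_PMF"
begin

text \<open>Coordinates of E are the finite type 'c; blk c is the block of coordinate c
  (blocks form the finite type 'b, n = CARD('b)); R^{p_i} is the subspace of vectors
  supported on block i.\<close>

definition blkspace :: "('c::finite \<Rightarrow> 'b) \<Rightarrow> 'b \<Rightarrow> (real^'c) set" where
  "blkspace blk i = {h. \<forall>c. blk c \<noteq> i \<longrightarrow> h $ c = 0}"

text \<open>U_i U_i^T: keep the i-th block, zero the others.\<close>
definition blockpart :: "('c::finite \<Rightarrow> 'b) \<Rightarrow> 'b \<Rightarrow> real^'c \<Rightarrow> real^'c" where
  "blockpart blk i x = (\<chi> c. if blk c = i then x $ c else 0)"

definition simplex_blk :: "('c::finite \<Rightarrow> 'b) \<Rightarrow> 'b \<Rightarrow> (real^'c) set" where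
  "simplex_blk blk i = {x \<in> blkspace blk i. (\<forall>c. x $ c \<ge> 0) \<and> (\<Sum>c\<in>{c. blk c = i}. x $ c) = 1}"

definition Qblk :: "('c::finite \<Rightarrow> 'b) \<Rightarrow> ('b \<Rightarrow> bool) \<Rightarrow> ('b \<Rightarrow> (real^'c) set) \<Rightarrow> 'b \<Rightarrow> (real^'c) set" where
  "Qblk blk eucl QE i = (if eucl i then QE i else simplex_blk blk i)"

definition Qprod :: "('c::finite \<Rightarrow> 'b) \<Rightarrow> ('b \<Rightarrow> bool) \<Rightarrow> ('b \<Rightarrow> (real^'c) set) \<Rightarrow> (real^'c) set" where
  "Qprod blk eucl QE = {x. \<forall>i. blockpart blk i x \<in> Qblk blk eucl QE i}"

definition bnorm :: "('c::finite \<Rightarrow> 'b) \<Rightarrow> ('b \<Rightarrow> bool) \<Rightarrow> ('b \<Rightarrow> 'c \<Rightarrow> 'c \<Rightarrow> real) \<Rightarrow> 'b \<Rightarrow> real^'c \<Rightarrow> real" where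
  "bnorm blk eucl B i h =
     (if eucl i then sqrt (\<Sum>c\<in>{c. blk c = i}. \<Sum>d\<in>{d. blk d = i}. B i c d * h $ c * h $ d)
      else (\<Sum>c\<in>{c. blk c = i}. \<bar>h $ c\<bar>))"

definition dnorm :: "('c::finite \<Rightarrow> 'b) \<Rightarrow> ('b \<Rightarrow> bool) \<Rightarrow> ('b \<Rightarrow> 'c \<Rightarrow> 'c \<Rightarrow> real) \<Rightarrow> 'b \<Rightarrow> real^'c \<Rightarrow> real" where
  "dnorm blk eucl B i g =
     Sup {blockpart blk i g \<bullet> h | h. h \<in> blkspace blk i \<and> bnorm blk eucl B i h \<le> 1}"

definition Vblk :: "('c::finite \<Rightarrow> 'b) \<Rightarrow> ('b \<Rightarrow> bool) \<Rightarrow> ('b \<Rightarrow> 'c \<Rightarrow> 'c \<Rightarrow> real) \<Rightarrow> 'b \<Rightarrow> real^'c \<Rightarrow> real^'c \<Rightarrow> real" where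
  "Vblk blk eucl B i z x =
     (if eucl i then (bnorm blk eucl B i (blockpart blk i (x - z)))\<^sup>2 / 2
      else (\<Sum>c\<in>{c. blk c = i}. x $ c * ln (x $ c / z $ c)))"

definition Vfull :: "('c::finite \<Rightarrow> 'b::finite) \<Rightarrow> ('b \<Rightarrow> bool) \<Rightarrow> ('b \<Rightarrow> 'c \<Rightarrow> 'c \<Rightarrow> real) \<Rightarrow> ('b \<Rightarrow> real) \<Rightarrow> real^'c \<Rightarrow> real^'c \<Rightarrow> real" where
  "Vfull blk eucl B L z x = (\<Sum>i\<in>UNIV. L i * Vblk blk eucl B i z x)"

primrec rstm_A :: "real \<Rightarrow> nat \<Rightarrow> real" where
  "rstm_A \<rho> 0 = 1 - 1 / \<rho>"
| "rstm_A \<rho> (Suc k) = rstm_A \<rho> k + (GREATEST a. rstm_A \<rho> k + a = \<rho>\<^sup>2 * a\<^sup>2)"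

fun rstm_alpha :: "real \<Rightarrow> nat \<Rightarrow> real" where
  "rstm_alpha \<rho> 0 = 1 - 1 / \<rho>"
| "rstm_alpha \<rho> (Suc k) = (GREATEST a. rstm_A \<rho> k + a = \<rho>\<^sup>2 * a\<^sup>2)"

end

theory Submission
  imports Defs
begin

lemma bp_nth[simp]: "blockpart blk i x $ c = (if blk c = i then x $ c else 0)"
  by (simp add: blockpart_def)

lemma bp_add: "blockpart blk i (x + y) = blockpart blk i x + blockpart blk i y"
  by (simp add: vec_eq_iff)
lemma bp_diff: "blockpart blk i (x - y) = blockpart blk i x - blockpart blk i y"
  by (simp add: vec_eq_iff)
lemma bp_scale: "blockpart blk i (a *\<^sub>R x) = a *\<^sub>R blockpart blk i x"
  by (simp add: vec_eq_iff)
lemma bp_zero[simp]: "blockpart blk i 0 = 0"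
  by (simp add: vec_eq_iff)
lemma bp_in: "blockpart blk i x \<in> blkspace blk i"
  by (simp add: blkspace_def)
lemma bp_id: "h \<in> blkspace blk i \<Longrightarrow> blockpart blk i h = h"
  by (auto simp: vec_eq_iff blkspace_def)
lemma bp_other: "h \<in> blkspace blk i \<Longrightarrow> j \<noteq> i \<Longrightarrow> blockpart blk j h = 0"
  by (auto simp: vec_eq_iff blkspace_def)
lemma bp_bp[simp]: "blockpart blk i (blockpart blk i x) = blockpart blk i x"
  by (simp add: vec_eq_iff)
lemma bp_sum: "(\<Sum>i\<in>UNIV. blockpart (blk::'c::finite \<Rightarrow> 'b::finite) i x) = x"
proof -
  have "(\<Sum>i\<in>UNIV. blockpart blk i x) $ c = x $ c" for c
    by (simp add: sum_component)
  then show ?thesis by (simp add: vec_eq_iff)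
qed

lemma inner_bp: "blockpart blk i g \<bullet> h = (\<Sum>c\<in>{c. blk c = i}. g $ c * h $ c)"
proof -
  have "blockpart blk i g \<bullet> h = (\<Sum>c\<in>UNIV. (if blk c = i then g $ c * h $ c else 0))"
    unfolding inner_vec_def by (intro sum.cong) auto
  also have "\<dots> = (\<Sum>c\<in>{c. blk c = i}. g $ c * h $ c)"
    by (simp add: sum.If_cases Int_def)
  finally show ?thesis .
qed

lemma inner_bp_sym: "blockpart blk i g \<bullet> h = g \<bullet> blockpart blk i h"
  "blockpart blk i g \<bullet> h = blockpart blk i g \<bullet> blockpart blk i h"
  unfolding inner_vec_def by (intro sum.cong; auto)+

definition QF :: "('c::finite \<Rightarrow> 'b) \<Rightarrow> ('b \<Rightarrow> 'c \<Rightarrow> 'c \<Rightarrow> real) \<Rightarrow> 'b \<Rightarrow> real^'c \<Rightarrow> real" where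
  "QF blk B i h = (\<Sum>c\<in>{c. blk c = i}. \<Sum>d\<in>{d. blk d = i}. B i c d * h $ c * h $ d)"

definition BL :: "('c::finite \<Rightarrow> 'b) \<Rightarrow> ('b \<Rightarrow> 'c \<Rightarrow> 'c \<Rightarrow> real) \<Rightarrow> 'b \<Rightarrow> real^'c \<Rightarrow> real^'c \<Rightarrow> real" where
  "BL blk B i v w = (\<Sum>c\<in>{c. blk c = i}. \<Sum>d\<in>{d. blk d = i}. B i c d * v $ c * w $ d)"

lemma QF_bp: "QF blk B i (blockpart blk i h) = QF blk B i h"
  by (simp add: QF_def)

lemma QF_scale: "QF blk B i (a *\<^sub>R h) = a\<^sup>2 * QF blk B i h"
  by (simp add: QF_def sum_distrib_left power2_eq_square algebra_simps)

lemma QF_add: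
  assumes sym: "\<forall>c d. B i c d = B i d c"
  shows "QF blk B i (v + t *\<^sub>R w) = QF blk B i v + 2 * t * BL blk B i v w + t\<^sup>2 * QF blk B i w"
proof -
  have sw: "(\<Sum>c\<in>{c. blk c = i}. \<Sum>d\<in>{d. blk d = i}. B i c d * w $ c * v $ d) = BL blk B i v w"
    unfolding BL_def by (subst sum.swap) (intro sum.cong refl, simp add: sym ac_simps)
  have "QF blk B i (v + t *\<^sub>R w) = (\<Sum>c\<in>{c. blk c = i}. \<Sum>d\<in>{d. blk d = i}.
      B i c d * v $ c * v $ d + t * (B i c d * v $ c * w $ d) + t * (B i c d * w $ c * v $ d)
      + t\<^sup>2 * (B i c d * w $ c * w $ d))"
    unfolding QF_def by (intro sum.cong refl) (simp add: algebra_simps power2_eq_square)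
  also have "\<dots> = QF blk B i v + t * BL blk B i v w + t * BL blk B i v w + t\<^sup>2 * QF blk B i w"
    using sw[unfolded BL_def] by (simp add: sum.distrib sum_distrib_left[symmetric] QF_def BL_def)
  finally show ?thesis by simp
qed

locale rs =
  fixes blk :: "'c::finite \<Rightarrow> 'b::finite"
    and eucl :: "'b \<Rightarrow> bool"
    and QE :: "'b \<Rightarrow> (real^'c) set"
    and B :: "'b \<Rightarrow> 'c \<Rightarrow> 'c \<Rightarrow> real"
    and L :: "'b \<Rightarrow> real"
  assumes blk_surj: "surj blk"
    and eucl_Q: "\<forall>i. eucl i \<longrightarrow> QE i \<subseteq> blkspace blk i \<and> closed (QE i) \<and> convex (QE i)"
    and eucl_B: "\<forall>i. eucl i \<longrightarrow> (\<forall>c d. B i c d = B i d c) \<and>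
                   (\<forall>h\<in>blkspace blk i. h \<noteq> 0 \<longrightarrow>
                      (\<Sum>c\<in>{c. blk c = i}. \<Sum>d\<in>{d. blk d = i}. B i c d * h $ c * h $ d) > 0)"
    and L_pos: "\<forall>i. L i > 0"
begin

lemma B_sym: "eucl i \<Longrightarrow> B i c d = B i d c"
  using eucl_B by blast

lemma QF_pos: "eucl i \<Longrightarrow> h \<in> blkspace blk i \<Longrightarrow> h \<noteq> 0 \<Longrightarrow> QF blk B i h > 0"
  using eucl_B unfolding QF_def by blast

lemma QF_nonneg: "eucl i \<Longrightarrow> QF blk B i h \<ge> 0"
  using QF_pos[of i "blockpart blk i h"] bp_in[of blk i h] QF_bp[of blk B i h]
  by (cases "blockpart blk i h = 0") (auto simp: QF_def)

lemma QF_zero: "eucl i \<Longrightarrow> QF blk B i h = 0 \<Longrightarrow> blockpart blk i h = 0"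
  using QF_pos[of i "blockpart blk i h"] bp_in[of blk i h] QF_bp[of blk B i h] by force

lemma bnorm_eucl: "eucl i \<Longrightarrow> bnorm blk eucl B i h = sqrt (QF blk B i h)"
  by (simp add: bnorm_def QF_def)
lemma bnorm_ent: "\<not> eucl i \<Longrightarrow> bnorm blk eucl B i h = (\<Sum>c\<in>{c. blk c = i}. \<bar>h $ c\<bar>)"
  by (simp add: bnorm_def)

lemma bnorm_bp: "bnorm blk eucl B i (blockpart blk i h) = bnorm blk eucl B i h"
  by (simp add: bnorm_def)

lemma bnorm_nonneg: "bnorm blk eucl B i h \<ge> 0"
  by (cases "eucl i") (auto simp: bnorm_eucl bnorm_ent QF_nonneg intro: sum_nonneg)

lemma bnorm_sq_eucl: "eucl i \<Longrightarrow> (bnorm blk eucl B i h)\<^sup>2 = QF blk B i h"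
  by (simp add: bnorm_eucl QF_nonneg)

lemma bnorm_scale: "bnorm blk eucl B i (a *\<^sub>R h) = \<bar>a\<bar> * bnorm blk eucl B i h"
proof (cases "eucl i")
  case True thus ?thesis by (simp add: bnorm_eucl QF_scale real_sqrt_mult)
next
  case False thus ?thesis by (simp add: bnorm_ent abs_mult sum_distrib_left)
qed

lemma bnorm_zero: "bnorm blk eucl B i h = 0 \<Longrightarrow> blockpart blk i h = 0"
proof (cases "eucl i")
  case True
  assume "bnorm blk eucl B i h = 0"
  with True have "QF blk B i h = 0" by (simp add: bnorm_eucl QF_nonneg)
  with True show ?thesis by (rule QF_zero)
next
  case False
  assume "bnorm blk eucl B i h = 0"
  with False have "\<forall>c\<in>{c. blk c = i}. \<bar>h $ c\<bar> = 0"
    by (subst sum_nonneg_eq_0_iff[symmetric]) (auto simp: bnorm_ent)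
  thus ?thesis by (auto simp: vec_eq_iff)
qed

end

lemma blkspace_scale: "h \<in> blkspace blk i \<Longrightarrow> a *\<^sub>R h \<in> blkspace blk i"
  by (simp add: blkspace_def)

lemma closed_blkspace: "closed (blkspace blk i)"
proof -
  have "blkspace blk i = (\<Inter>c\<in>{c. blk c \<noteq> i}. {h. h $ c = 0})"
    by (auto simp: blkspace_def)
  moreover have "closed {h::real^'a. h $ c = 0}" for c
    by (intro closed_Collect_eq continuous_intros)
  ultimately show ?thesis by auto
qed

context rs begin

lemma QF_cont: "continuous_on S (QF blk B i)"
  unfolding QF_def by (intro continuous_intros)

lemma bnorm_lower: "\<exists>K>0. \<forall>h\<in>blkspace blk i. norm h \<le> K * bnorm blk eucl B i h"
proof (cases "eucl i")
  case False
  have "norm h \<le> 1 * bnorm blk eucl B i h" if "h \<in> blkspace blk i" for h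
  proof -
    have "norm h \<le> (\<Sum>c\<in>UNIV. \<bar>h $ c\<bar>)" by (rule norm_le_l1_cart)
    also have "\<dots> = (\<Sum>c\<in>UNIV. if blk c = i then \<bar>h $ c\<bar> else 0)"
      using that by (intro sum.cong) (auto simp: blkspace_def)
    also have "\<dots> = bnorm blk eucl B i h"
      using False by (simp add: bnorm_ent sum.If_cases Int_def)
    finally show ?thesis by simp
  qed
  thus ?thesis by (intro exI[of _ 1]) auto
next
  case True
  define S where "S = blkspace blk i \<inter> sphere 0 1"
  show ?thesis
  proof (cases "S = {}")
    case True
    have "h = 0" if "h \<in> blkspace blk i" for h
    proof (rule ccontr)
      assume "h \<noteq> 0"
      hence "(1 / norm h) *\<^sub>R h \<in> S" using that by (auto simp: S_def blkspace_scale)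
      thus False using True by auto
    qed
    thus ?thesis by (intro exI[of _ 1]) (auto, metis bnorm_nonneg norm_zero)
  next
    case False
    have "compact S" unfolding S_def
      by (intro closed_Int_compact closed_blkspace compact_sphere)
    from continuous_attains_inf[OF this False QF_cont]
    obtain h0 where h0: "h0 \<in> S" "\<forall>y\<in>S. QF blk B i h0 \<le> QF blk B i y" by blast
    define m where "m = QF blk B i h0"
    have "m > 0" using h0(1) \<open>eucl i\<close> unfolding m_def S_def
      by (intro QF_pos) auto
    have "norm h \<le> (1 / sqrt m) * bnorm blk eucl B i h" if hb: "h \<in> blkspace blk i" for h
    proof (cases "h = 0")
      case True thus ?thesis using bnorm_nonneg[of i h] \<open>m > 0\<close> by simp
    next
      case False
      have "(1 / norm h) *\<^sub>R h \<in> S" using False hb by (auto simp: S_def blkspace_scale)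
      hence "m \<le> QF blk B i ((1 / norm h) *\<^sub>R h)" using h0 m_def by auto
      also have "\<dots> = QF blk B i h / (norm h)\<^sup>2" by (simp add: QF_scale power_divide)
      finally have "m * (norm h)\<^sup>2 \<le> QF blk B i h" using False by (simp add: field_simps)
      hence "sqrt (m * (norm h)\<^sup>2) \<le> sqrt (QF blk B i h)" by simp
      hence "sqrt m * norm h \<le> bnorm blk eucl B i h"
        using \<open>eucl i\<close> by (simp add: real_sqrt_mult bnorm_eucl)
      thus ?thesis using \<open>m > 0\<close> by (simp add: field_simps)
    qed
    thus ?thesis using \<open>m > 0\<close> by (intro exI[of _ "1 / sqrt m"]) auto
  qed
qed

lemma dnorm_set_bdd: "bdd_above {blockpart blk i g \<bullet> h | h. h \<in> blkspace blk i \<and> bnorm blk eucl B i h \<le> 1}"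
proof -
  obtain K where K: "K > 0" "\<forall>h\<in>blkspace blk i. norm h \<le> K * bnorm blk eucl B i h"
    using bnorm_lower by blast
  have "blockpart blk i g \<bullet> h \<le> norm (blockpart blk i g) * K"
    if "h \<in> blkspace blk i" "bnorm blk eucl B i h \<le> 1" for h
  proof -
    have "blockpart blk i g \<bullet> h \<le> norm (blockpart blk i g) * norm h" by (rule norm_cauchy_schwarz)
    also have "\<dots> \<le> norm (blockpart blk i g) * K"
    proof (rule mult_left_mono)
      show "norm h \<le> K" using K that by (smt (verit) mult_left_le)
    qed simp
    finally show ?thesis .
  qed
  thus ?thesis unfolding bdd_above_def by blast
qed

lemma dnorm_ineq: "blockpart blk i g \<bullet> h \<le> dnorm blk eucl B i g * bnorm blk eucl B i h"
proof -
  define h' where "h' = blockpart blk i h"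
  have e1: "blockpart blk i g \<bullet> h = blockpart blk i g \<bullet> h'"
    unfolding h'_def by (rule inner_bp_sym(2))
  have e2: "bnorm blk eucl B i h = bnorm blk eucl B i h'" unfolding h'_def by (simp add: bnorm_bp)
  have h'b: "h' \<in> blkspace blk i" unfolding h'_def by (rule bp_in)
  show ?thesis
  proof (cases "bnorm blk eucl B i h' = 0")
    case True
    hence "h' = 0" using bnorm_zero[of i h'] bp_id[OF h'b] by simp
    thus ?thesis using e1 e2 True by simp
  next
    case False
    define b where "b = bnorm blk eucl B i h'"
    have "b > 0" using False bnorm_nonneg[of i h'] b_def by simp
    have "bnorm blk eucl B i ((1/b) *\<^sub>R h') = 1" using \<open>b > 0\<close> by (simp add: bnorm_scale b_def)
    hence mem: "blockpart blk i g \<bullet> ((1/b) *\<^sub>R h') \<in> {blockpart blk i g \<bullet> h | h. h \<in> blkspace blk i \<and> bnorm blk eucl B i h \<le> 1}"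
      using h'b blkspace_scale by fastforce
    have "blockpart blk i g \<bullet> ((1/b) *\<^sub>R h') \<le> dnorm blk eucl B i g"
      unfolding dnorm_def by (intro cSup_upper[OF mem] dnorm_set_bdd)
    hence "(blockpart blk i g \<bullet> h') / b \<le> dnorm blk eucl B i g" by simp
    hence "blockpart blk i g \<bullet> h' \<le> dnorm blk eucl B i g * b" using \<open>b>0\<close> by (simp add: field_simps)
    thus ?thesis using e1 e2 b_def by simp
  qed
qed

lemma bnorm_0: "bnorm blk eucl B i 0 = 0"
  by (cases "eucl i") (simp_all add: bnorm_eucl bnorm_ent QF_def)

lemma dnorm_nonneg: "dnorm blk eucl B i g \<ge> 0"
proof -
  have "blockpart blk i g \<bullet> 0 \<le> dnorm blk eucl B i g"
    unfolding dnorm_def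
    by (intro cSup_upper dnorm_set_bdd) (auto intro!: exI[of _ 0] simp: blkspace_def bnorm_0)
  thus ?thesis by simp
qed

end

definition pD :: "real \<Rightarrow> real" where
  "pD t = ln t - (t - 1) * (5 * t + 1) / (2 * t * (t + 2))"

lemma pD_deriv_aux: assumes "0 < (t::real)" shows
  "1 / t - ((10 * t - 4) * (2 * t * (t + 2)) - (t - 1) * (5 * t + 1) * (4 * t + 4)) /
    (4 * (t * ((t + 2) * (t * (t + 2))))) = (t - 1)^3 / (t^2 * (t + 2)^2)"
proof -
  have p: "t + 2 > 0" using assms by simp
  define D where "D = 4 * (t * ((t + 2) * (t * (t + 2))))"
  have "1 / t = (4 * t * (t + 2)^2) / D" using assms p by (simp add: D_def power2_eq_square)
  hence "1 / t - ((10 * t - 4) * (2 * t * (t + 2)) - (t - 1) * (5 * t + 1) * (4 * t + 4)) / D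
     = (4 * t * (t + 2)^2 - ((10 * t - 4) * (2 * t * (t + 2)) - (t - 1) * (5 * t + 1) * (4 * t + 4))) / D"
    by (simp add: diff_divide_distrib)
  also have "4 * t * (t + 2)^2 - ((10 * t - 4) * (2 * t * (t + 2)) - (t - 1) * (5 * t + 1) * (4 * t + 4))
     = 4 * (t - 1)^3" by (simp add: algebra_simps power2_eq_square power3_eq_cube)
  also have "4 * (t - 1)^3 / D = (t - 1)^3 / (t^2 * (t + 2)^2)"
    by (simp add: D_def power2_eq_square ac_simps)
  finally show ?thesis unfolding D_def .
qed

lemma pD_deriv0: "0 < t \<Longrightarrow> (pD has_real_derivative (1 / t - ((10 * t - 4) * (2 * t * (t + 2)) - (t - 1) * (5 * t + 1) * (4 * t + 4)) /
    (4 * (t * ((t + 2) * (t * (t + 2))))))) (at t)"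
  unfolding pD_def
  by (rule derivative_eq_intros refl | simp)+

lemma pD_deriv: assumes "t > 0" shows "(pD has_real_derivative ((t - 1)^3 / (t^2 * (t + 2)^2))) (at t)"
  using pD_deriv0[OF assms] pD_deriv_aux[OF assms] by simp

lemma pD_cont: "0 < a \<Longrightarrow> continuous_on {a..b} pD"
  unfolding pD_def by (intro continuous_intros) auto

lemma pD_nonneg: assumes "t > 0" shows "pD t \<ge> 0"
proof (cases "t \<ge> 1")
  case True
  have d: "\<exists>y. DERIV pD x :> y \<and> y \<ge> 0" if "1 < x" "x < t" for x
    using that by (intro exI[of _ "(x - 1)^3 / (x^2 * (x + 2)^2)"]) (auto intro!: pD_deriv)
  have "pD 1 \<le> pD t"
    by (rule DERIV_nonneg_imp_increasing_open[OF True d pD_cont]) auto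
  thus ?thesis by (simp add: pD_def)
next
  case False
  have d: "\<exists>y. DERIV pD x :> y \<and> y \<le> 0" if "t < x" "x < 1" for x
  proof -
    have "x > 0" using assms that by simp
    moreover have "(x - 1)^3 \<le> 0" using \<open>x < 1\<close> by (simp add: power_le_zero_eq)
    ultimately show ?thesis
      by (intro exI[of _ "(x - 1)^3 / (x^2 * (x + 2)^2)"])
         (auto intro!: pD_deriv divide_nonpos_pos)
  qed
  have "pD t \<ge> pD 1"
    by (rule DERIV_nonpos_imp_decreasing_open[OF _ d pD_cont]) (use False assms in auto)
  thus ?thesis by (simp add: pD_def)
qed

lemma ln_poly:
  fixes x z :: real
  assumes "x > 0" "z > 0"
  shows "2 * x * (x + 2 * z) * ln (x / z) \<ge> (x - z) * (5 * x + z)"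
proof -
  define t where "t = x / z"
  have tp: "t > 0" using assms by (simp add: t_def)
  have x_eq: "x = z * t" using assms by (simp add: t_def)
  have "ln t \<ge> (t - 1) * (5 * t + 1) / (2 * t * (t + 2))" using pD_nonneg[OF tp] by (simp add: pD_def)
  hence "(t - 1) * (5 * t + 1) \<le> ln t * (2 * t * (t + 2))"
    using tp by (simp add: pos_divide_le_eq)
  hence "z\<^sup>2 * ((t - 1) * (5 * t + 1)) \<le> z\<^sup>2 * (ln t * (2 * t * (t + 2)))"
    by (intro mult_left_mono) auto
  moreover have "z\<^sup>2 * ((t - 1) * (5 * t + 1)) = (x - z) * (5 * x + z)"
    unfolding x_eq by (simp add: algebra_simps power2_eq_square)
  moreover have "z\<^sup>2 * (ln t * (2 * t * (t + 2))) = 2 * x * (x + 2 * z) * ln (x / z)"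
    unfolding x_eq using assms by (simp add: algebra_simps power2_eq_square)
  ultimately show ?thesis by simp
qed

lemma kl_point:
  fixes x z :: real
  assumes "x \<ge> 0" "z > 0"
  shows "x * ln (x / z) - x + z \<ge> 3 * (x - z)^2 / (2 * (x + 2 * z))"
proof (cases "x = 0")
  case True thus ?thesis using assms by (simp add: power2_eq_square field_simps)
next
  case False
  hence xp: "x > 0" using assms by simp
  have d: "2 * (x + 2 * z) > 0" using xp assms by simp
  have "3 * (x - z)^2 \<le> 2 * (x + 2 * z) * (x * ln (x / z) - x + z)"
  proof -
    have "2 * (x + 2 * z) * (x * ln (x / z) - x + z) = 2 * x * (x + 2 * z) * ln (x / z) - 2 * (x + 2 * z) * (x - z)"
      by (simp add: algebra_simps)
    moreover have "3 * (x - z)^2 = (x - z) * (5 * x + z) - 2 * (x + 2 * z) * (x - z)"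
      by (simp add: algebra_simps power2_eq_square)
    ultimately show ?thesis using ln_poly[OF xp assms(2)] by linarith
  qed
  thus ?thesis using d by (simp add: pos_divide_le_eq mult.commute)
qed

lemma pinsker_sum:
  fixes x z :: "'a \<Rightarrow> real"
  assumes fin: "finite S" and x0: "\<forall>c\<in>S. x c \<ge> 0" and zp: "\<forall>c\<in>S. z c > 0"
    and sx: "(\<Sum>c\<in>S. x c) = 1" and sz: "(\<Sum>c\<in>S. z c) = 1"
  shows "(\<Sum>c\<in>S. \<bar>x c - z c\<bar>)^2 \<le> 2 * (\<Sum>c\<in>S. x c * ln (x c / z c))"
proof -
  define w where "w c = (x c + 2 * z c) / 3" for c
  have wp: "w c > 0" if "c \<in> S" for c
  proof -
    have "x c \<ge> 0" "z c > 0" using x0 zp that by auto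
    thus ?thesis by (simp add: w_def)
  qed
  have sw: "(\<Sum>c\<in>S. w c) = 1" by (simp add: w_def sum_divide_distrib[symmetric] sum.distrib sum_distrib_left[symmetric] sx sz)
  have "(\<Sum>c\<in>S. \<bar>x c - z c\<bar>)^2 = (\<Sum>c\<in>S. (\<bar>x c - z c\<bar> / sqrt (w c)) * sqrt (w c))^2"
    using wp by (intro arg_cong[where f="\<lambda>a. a^2"] sum.cong) (auto dest: wp intro: less_imp_neq[symmetric])
  also have "\<dots> \<le> (\<Sum>c\<in>S. (\<bar>x c - z c\<bar> / sqrt (w c))^2) * (\<Sum>c\<in>S. (sqrt (w c))^2)"
    by (rule Cauchy_Schwarz_ineq_sum)
  also have "(\<Sum>c\<in>S. (sqrt (w c))^2) = 1" using wp sw by (simp add: less_imp_le)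
  also have "(\<Sum>c\<in>S. (\<bar>x c - z c\<bar> / sqrt (w c))^2) = (\<Sum>c\<in>S. 3 * (x c - z c)^2 / (x c + 2 * z c))"
    using wp by (intro sum.cong refl) (auto simp: power_divide less_imp_le w_def)
  also have "\<dots> \<le> (\<Sum>c\<in>S. 2 * (x c * ln (x c / z c) - x c + z c))"
  proof (rule sum_mono)
    fix c assume c: "c \<in> S"
    have "x c \<ge> 0" "z c > 0" using x0 zp c by auto
    hence "x c + 2 * z c > 0" by linarith
    thus "3 * (x c - z c)^2 / (x c + 2 * z c) \<le> 2 * (x c * ln (x c / z c) - x c + z c)"
      using kl_point[of "x c" "z c"] x0 zp c by (simp add: field_simps)
  qed
  also have "\<dots> = 2 * (\<Sum>c\<in>S. x c * ln (x c / z c))"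
    by (simp add: sum_distrib_left[symmetric] sum.distrib sum_subtractf sx sz)
  finally show ?thesis by simp
qed

definition repl :: "('c::finite \<Rightarrow> 'b) \<Rightarrow> 'b \<Rightarrow> real^'c \<Rightarrow> real^'c \<Rightarrow> real^'c" where
  "repl blk i z w = z - blockpart blk i z + blockpart blk i w"

lemma repl_nth: "repl blk i z w $ c = (if blk c = i then w $ c else z $ c)"
  by (simp add: repl_def)

lemma bp_repl: "blockpart blk j (repl blk i z w) = (if j = i then blockpart blk i w else blockpart blk j z)"
  by (auto simp: vec_eq_iff repl_nth)

lemma inner_repl: "blockpart blk i g \<bullet> repl blk i z w = blockpart blk i g \<bullet> w"
  by (simp add: inner_bp repl_nth)

lemma inner_repl_other: "j \<noteq> i \<Longrightarrow> blockpart blk j g \<bullet> repl blk i z w = blockpart blk j g \<bullet> z"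
  by (auto simp: inner_bp repl_nth intro!: sum.cong)

context rs begin

abbreviation "Q \<equiv> Qprod blk eucl QE"

definition entpos :: "real^'c \<Rightarrow> bool" where
  "entpos z \<longleftrightarrow> (\<forall>c. \<not> eucl (blk c) \<longrightarrow> z $ c > 0)"

lemma Q_iff: "x \<in> Q \<longleftrightarrow> (\<forall>i. blockpart blk i x \<in> Qblk blk eucl QE i)"
  by (simp add: Qprod_def)

lemma Q_ent:
  assumes "x \<in> Q" "\<not> eucl i"
  shows "\<forall>c. blk c = i \<longrightarrow> x $ c \<ge> 0" "(\<Sum>c\<in>{c. blk c = i}. x $ c) = 1"
proof -
  have "blockpart blk i x \<in> Qblk blk eucl QE i" using assms(1) Q_iff by blast
  hence "blockpart blk i x \<in> simplex_blk blk i" using assms(2) by (simp add: Qblk_def)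
  hence h: "\<forall>c. blockpart blk i x $ c \<ge> 0" "(\<Sum>c\<in>{c. blk c = i}. blockpart blk i x $ c) = 1"
    by (auto simp: simplex_blk_def)
  show "\<forall>c. blk c = i \<longrightarrow> x $ c \<ge> 0"
  proof (intro allI impI)
    fix c assume "blk c = i" thus "x $ c \<ge> 0" using h(1) by (metis bp_nth)
  qed
  show "(\<Sum>c\<in>{c. blk c = i}. x $ c) = 1" using h(2) by simp
qed

lemma convex_simplex: "convex (simplex_blk blk i)"
  unfolding convex_def simplex_blk_def blkspace_def
  by (auto simp: sum.distrib sum_distrib_left[symmetric])

lemma convex_Qblk: "convex (Qblk blk eucl QE i)"
  using eucl_Q convex_simplex by (auto simp: Qblk_def)

lemma Q_conv:
  assumes "x \<in> Q" "y \<in> Q" "0 \<le> u" "0 \<le> v" "u + v = 1"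
  shows "u *\<^sub>R x + v *\<^sub>R y \<in> Q"
  unfolding Q_iff
proof
  fix i
  have "blockpart blk i (u *\<^sub>R x + v *\<^sub>R y) = u *\<^sub>R blockpart blk i x + v *\<^sub>R blockpart blk i y"
    by (simp add: bp_add bp_scale)
  also have "\<dots> \<in> Qblk blk eucl QE i"
    using convex_Qblk[of i] assms unfolding convex_def Q_iff by blast
  finally show "blockpart blk i (u *\<^sub>R x + v *\<^sub>R y) \<in> Qblk blk eucl QE i" .
qed

lemma convex_Q: "convex Q"
  using Q_conv unfolding convex_def by blast

lemma repl_Q: "z \<in> Q \<Longrightarrow> blockpart blk i w \<in> Qblk blk eucl QE i \<Longrightarrow> repl blk i z w \<in> Q"
  by (auto simp: Q_iff bp_repl)

lemma Vblk_cong: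
  assumes "\<And>c. blk c = i \<Longrightarrow> z $ c = z' $ c" "\<And>c. blk c = i \<Longrightarrow> x $ c = x' $ c"
  shows "Vblk blk eucl B i z x = Vblk blk eucl B i z' x'"
proof -
  have h1: "(if blk c = i then (x - z) $ c else 0) = (if blk c = i then (x' - z') $ c else 0)" for c
    using assms by auto
  have h2: "(\<Sum>c\<in>{c. blk c = i}. x $ c * ln (x $ c / z $ c)) = (\<Sum>c\<in>{c. blk c = i}. x' $ c * ln (x' $ c / z' $ c))"
    using assms by (intro sum.cong) auto
  show ?thesis unfolding Vblk_def bnorm_def blockpart_def by (simp add: h1 h2)
qed

lemma Vblk_self: "Vblk blk eucl B i z z = 0"
  by (cases "eucl i") (auto simp: Vblk_def bnorm_0 intro!: sum.neutral)

lemma Vfull_self: "Vfull blk eucl B L z z = 0"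
  by (simp add: Vfull_def Vblk_self)

lemma Vblk_eucl: "eucl i \<Longrightarrow> Vblk blk eucl B i z x = (bnorm blk eucl B i (x - z))\<^sup>2 / 2"
  by (simp add: Vblk_def bnorm_bp)

lemma Vblk_eucl_QF: "eucl i \<Longrightarrow> Vblk blk eucl B i z x = QF blk B i (x - z) / 2"
  by (simp add: Vblk_eucl bnorm_sq_eucl)

lemma Vblk_ent: "\<not> eucl i \<Longrightarrow> Vblk blk eucl B i z x = (\<Sum>c\<in>{c. blk c = i}. x $ c * ln (x $ c / z $ c))"
  by (simp add: Vblk_def)

lemma SC:
  assumes "x \<in> Q" "z \<in> Q" "entpos z"
  shows "Vblk blk eucl B i z x \<ge> (bnorm blk eucl B i (x - z))\<^sup>2 / 2"
proof (cases "eucl i")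
  case True thus ?thesis by (simp add: Vblk_eucl)
next
  case False
  have "(\<Sum>c\<in>{c. blk c = i}. \<bar>x $ c - z $ c\<bar>)^2 \<le> 2 * (\<Sum>c\<in>{c. blk c = i}. x $ c * ln (x $ c / z $ c))"
    using Q_ent[OF assms(1) False] Q_ent[OF assms(2) False] assms(3) False
    by (intro pinsker_sum) (auto simp: entpos_def)
  thus ?thesis using False by (simp add: Vblk_ent bnorm_ent)
qed

lemma Vblk_nonneg: "x \<in> Q \<Longrightarrow> z \<in> Q \<Longrightarrow> entpos z \<Longrightarrow> Vblk blk eucl B i z x \<ge> 0"
  by (rule order_trans[OF _ SC]) auto

lemma Vfull_nonneg: "x \<in> Q \<Longrightarrow> z \<in> Q \<Longrightarrow> entpos z \<Longrightarrow> Vfull blk eucl B L z x \<ge> 0"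
  unfolding Vfull_def using L_pos Vblk_nonneg by (intro sum_nonneg) (simp add: less_imp_le)

lemma Vfull_ge_blk:
  assumes "x \<in> Q" "z \<in> Q" "entpos z"
  shows "Vfull blk eucl B L z x \<ge> L i * Vblk blk eucl B i z x"
proof -
  have "L i * Vblk blk eucl B i z x = (\<Sum>j\<in>{i}. L j * Vblk blk eucl B j z x)" by simp
  also have "\<dots> \<le> Vfull blk eucl B L z x" unfolding Vfull_def
    using L_pos Vblk_nonneg[OF assms] by (intro sum_mono2) (auto simp: less_imp_le)
  finally show ?thesis .
qed

lemma Vfull_ge:
  assumes "x \<in> Q" "z \<in> Q" "entpos z"
  shows "Vfull blk eucl B L z x \<ge> L i * (bnorm blk eucl B i (x - z))\<^sup>2 / 2"
  using Vfull_ge_blk[OF assms, of i] SC[OF assms, of i] L_pos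
  by (smt (verit, ccfv_threshold) mult_left_mono times_divide_eq_right)

lemma Vfull_repl:
  "Vfull blk eucl B L a (repl blk i z w) = Vfull blk eucl B L a z - L i * Vblk blk eucl B i a z + L i * Vblk blk eucl B i a w"
proof -
  have "Vfull blk eucl B L a (repl blk i z w) =
     (\<Sum>j\<in>UNIV. L j * Vblk blk eucl B j a z + (if j = i then L i * Vblk blk eucl B i a w - L i * Vblk blk eucl B i a z else 0))"
    unfolding Vfull_def
  proof (intro sum.cong refl)
    fix j
    show "L j * Vblk blk eucl B j a (repl blk i z w) = L j * Vblk blk eucl B j a z +
       (if j = i then L i * Vblk blk eucl B i a w - L i * Vblk blk eucl B i a z else 0)"
    proof (cases "j = i")
      case True
      have "Vblk blk eucl B j a (repl blk i z w) = Vblk blk eucl B j a w"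
        using True by (intro Vblk_cong) (auto simp: repl_nth)
      thus ?thesis using True by simp
    next
      case False
      have "Vblk blk eucl B j a (repl blk i z w) = Vblk blk eucl B j a z"
        using False by (intro Vblk_cong) (auto simp: repl_nth)
      thus ?thesis using False by simp
    qed
  qed
  also have "\<dots> = Vfull blk eucl B L a z - L i * Vblk blk eucl B i a z + L i * Vblk blk eucl B i a w"
    by (simp add: sum.distrib Vfull_def)
  finally show ?thesis .
qed

end

lemma ent_diff: fixes y a u :: real assumes "y \<ge> 0" "a > 0" "u > 0" shows "y * ln (y / a) - y * ln (y / u) = y * (ln u - ln a)"
proof (cases "y = 0")
  case False
  hence "y > 0" using assms by (simp add: less_le)
  thus ?thesis using assms by (simp add: ln_div algebra_simps)
qed simp

lemma ent_small: fixes y u :: real shows "y \<ge> 0 \<Longrightarrow> u > 0 \<Longrightarrow> y * ln (y / u) \<le> (y - u)^2 / u + (y - u)"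
proof (cases "y = 0")
  case True
  assume u: "u > 0"
  have "(y - u)^2 / u + (y - u) = 0" using u True by (simp add: power2_eq_square)
  thus ?thesis using True by simp
next
  case False
  assume y: "y \<ge> 0" and u: "u > 0"
  hence yp: "y > 0" using False by simp
  have "ln (y / u) \<le> y / u - 1" using yp u by (intro ln_le_minus_one) simp
  hence "y * ln (y / u) \<le> y * (y / u - 1)" using yp by (intro mult_left_mono) auto
  also have "y * (y / u - 1) = (y - u)^2 / u + (y - u)" using u by (simp add: field_simps power2_eq_square)
  finally show ?thesis .
qed

lemma QF_zero_vec: "QF blk B i 0 = 0" by (simp add: QF_def)

context rs begin

lemma zt_eq: "u + t *\<^sub>R (z - u) = (1 - t) *\<^sub>R u + t *\<^sub>R (z::real^'c)"
  by (simp add: algebra_simps)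

lemma zt_Q: "u \<in> Q \<Longrightarrow> z \<in> Q \<Longrightarrow> 0 \<le> t \<Longrightarrow> t \<le> 1 \<Longrightarrow> u + t *\<^sub>R (z - u) \<in> Q"
  unfolding zt_eq by (rule Q_conv) auto

lemma D_ent:
  assumes "y \<in> Q" "entpos a" "entpos u" "\<not> eucl i"
  shows "Vblk blk eucl B i a y - Vblk blk eucl B i u y = (\<Sum>c\<in>{c. blk c = i}. y $ c * (ln (u $ c) - ln (a $ c)))"
proof -
  have "Vblk blk eucl B i a y - Vblk blk eucl B i u y = (\<Sum>c\<in>{c. blk c = i}. y $ c * ln (y $ c / a $ c) - y $ c * ln (y $ c / u $ c))"
    using assms(4) by (simp add: Vblk_ent sum_subtractf)
  also have "\<dots> = (\<Sum>c\<in>{c. blk c = i}. y $ c * (ln (u $ c) - ln (a $ c)))"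
  proof (intro sum.cong refl)
    fix c assume c: "c \<in> {c. blk c = i}"
    show "y $ c * ln (y $ c / a $ c) - y $ c * ln (y $ c / u $ c) = y $ c * (ln (u $ c) - ln (a $ c))"
      using Q_ent(1)[OF assms(1) assms(4)] assms(2,3,4) c by (intro ent_diff) (auto simp: entpos_def)
  qed
  finally show ?thesis .
qed

definition Cb :: "'b \<Rightarrow> real^'c \<Rightarrow> real^'c \<Rightarrow> real" where
  "Cb i u z = (if eucl i then QF blk B i (z - u) / 2 else (\<Sum>c\<in>{c. blk c = i}. (z $ c - u $ c)^2 / u $ c))"

lemma V_small:
  assumes "u \<in> Q" "z \<in> Q" "entpos u" "0 \<le> t" "t \<le> 1"
  shows "Vblk blk eucl B i u (u + t *\<^sub>R (z - u)) \<le> t\<^sup>2 * Cb i u z"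
proof (cases "eucl i")
  case True
  thus ?thesis by (simp add: Vblk_eucl_QF QF_scale Cb_def)
next
  case False
  define y where "y = u + t *\<^sub>R (z - u)"
  have yQ: "y \<in> Q" unfolding y_def using assms by (intro zt_Q) auto
  have "Vblk blk eucl B i u y \<le> (\<Sum>c\<in>{c. blk c = i}. (y $ c - u $ c)^2 / u $ c + (y $ c - u $ c))"
    unfolding Vblk_ent[OF False]
    using Q_ent(1)[OF yQ False] assms(3) False by (intro sum_mono ent_small) (auto simp: entpos_def)
  also have "\<dots> = (\<Sum>c\<in>{c. blk c = i}. (y $ c - u $ c)^2 / u $ c)"
    using Q_ent(2)[OF yQ False] Q_ent(2)[OF assms(1) False] by (simp add: sum.distrib sum_subtractf)
  also have "\<dots> = t\<^sup>2 * (\<Sum>c\<in>{c. blk c = i}. (z $ c - u $ c)^2 / u $ c)"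
    by (auto simp: y_def sum_distrib_left power2_eq_square algebra_simps intro!: sum.cong)
  finally show ?thesis using False by (simp add: Cb_def y_def)
qed

lemma D_affine:
  assumes "u \<in> Q" "z \<in> Q" "a \<in> Q" "entpos a" "entpos u" "0 \<le> t" "t \<le> 1"
  shows "Vblk blk eucl B i a (u + t *\<^sub>R (z - u)) - Vblk blk eucl B i u (u + t *\<^sub>R (z - u))
        = Vblk blk eucl B i a u + t * ((Vblk blk eucl B i a z - Vblk blk eucl B i u z) - Vblk blk eucl B i a u)"
proof (cases "eucl i")
  case True
  have sym: "\<forall>c d. B i c d = B i d c" using B_sym[OF True] by blast
  have e1: "u + t *\<^sub>R (z - u) - a = (u - a) + t *\<^sub>R (z - u)" by (simp add: algebra_simps)
  have e2: "u + t *\<^sub>R (z - u) - u = t *\<^sub>R (z - u)" by simp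
  have e3: "z - a = (u - a) + 1 *\<^sub>R (z - u)" by simp
  show ?thesis using True
    unfolding Vblk_eucl_QF[OF True] e1 e2
    apply (subst e3)
    apply (simp only: QF_add[where B=B and i=i, OF sym] QF_scale QF_zero_vec)
    apply (simp add: field_simps)
    done
next
  case False
  define K where "K c = ln (u $ c) - ln (a $ c)" for c
  have yQ: "u + t *\<^sub>R (z - u) \<in> Q" using assms by (intro zt_Q) auto
  have "Vblk blk eucl B i a (u + t *\<^sub>R (z - u)) - Vblk blk eucl B i u (u + t *\<^sub>R (z - u))
     = (\<Sum>c\<in>{c. blk c = i}. (u + t *\<^sub>R (z - u)) $ c * K c)"
    unfolding K_def by (rule D_ent[OF yQ assms(4,5) False])
  also have "\<dots> = (\<Sum>c\<in>{c. blk c = i}. u $ c * K c) + t * ((\<Sum>c\<in>{c. blk c = i}. z $ c * K c) - (\<Sum>c\<in>{c. blk c = i}. u $ c * K c))"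
    by (simp add: algebra_simps sum.distrib sum_subtractf sum_distrib_left)
  also have "\<dots> = Vblk blk eucl B i a u + t * ((Vblk blk eucl B i a z - Vblk blk eucl B i u z) - Vblk blk eucl B i a u)"
    using D_ent[OF assms(1,4,5) False] D_ent[OF assms(2,4,5) False] Vblk_self[of i u]
    unfolding K_def by simp
  finally show ?thesis .
qed

end

context rs begin

definition ismin :: "real^'c \<Rightarrow> real^'c \<Rightarrow> real^'c \<Rightarrow> bool" where
  "ismin a G u \<longleftrightarrow> u \<in> Q \<and> (\<forall>z\<in>Q. Vfull blk eucl B L a u + G \<bullet> u \<le> Vfull blk eucl B L a z + G \<bullet> z)"

lemma three_point:
  assumes aQ: "a \<in> Q" and ea: "entpos a" and eu: "entpos u" and m: "ismin a G u" and zQ: "z \<in> Q"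
  shows "Vfull blk eucl B L u z \<le> Vfull blk eucl B L a z - Vfull blk eucl B L a u + G \<bullet> (z - u)"
proof -
  have uQ: "u \<in> Q" using m by (simp add: ismin_def)
  define X where "X = (Vfull blk eucl B L a z - Vfull blk eucl B L u z) - Vfull blk eucl B L a u + G \<bullet> (z - u)"
  define C where "C = (\<Sum>i\<in>UNIV. L i * Cb i u z)"
  have key: "0 \<le> t * C + X" if t: "0 < t" "t \<le> 1" for t
  proof -
    define zt where "zt = u + t *\<^sub>R (z - u)"
    have ztQ: "zt \<in> Q" unfolding zt_def using uQ zQ t by (intro zt_Q) auto
    have "Vfull blk eucl B L a zt - Vfull blk eucl B L u zt
        = (\<Sum>i\<in>UNIV. L i * (Vblk blk eucl B i a zt - Vblk blk eucl B i u zt))"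
      by (simp add: Vfull_def sum_subtractf algebra_simps)
    also have "\<dots> = (\<Sum>i\<in>UNIV. L i * Vblk blk eucl B i a u + t * (L i * (Vblk blk eucl B i a z - Vblk blk eucl B i u z) - L i * Vblk blk eucl B i a u))"
    proof (intro sum.cong refl)
      fix i
      have eq: "Vblk blk eucl B i a zt - Vblk blk eucl B i u zt = Vblk blk eucl B i a u + t * ((Vblk blk eucl B i a z - Vblk blk eucl B i u z) - Vblk blk eucl B i a u)"
        unfolding zt_def using D_affine[OF uQ zQ aQ ea eu, of t i] t by simp
      show "L i * (Vblk blk eucl B i a zt - Vblk blk eucl B i u zt) = L i * Vblk blk eucl B i a u + t * (L i * (Vblk blk eucl B i a z - Vblk blk eucl B i u z) - L i * Vblk blk eucl B i a u)"
        unfolding eq by (simp add: algebra_simps)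
    qed
    also have "\<dots> = Vfull blk eucl B L a u + t * ((Vfull blk eucl B L a z - Vfull blk eucl B L u z) - Vfull blk eucl B L a u)"
      by (simp add: Vfull_def sum.distrib sum_subtractf sum_distrib_left algebra_simps)
    finally have D: "Vfull blk eucl B L a zt - Vfull blk eucl B L u zt = Vfull blk eucl B L a u + t * ((Vfull blk eucl B L a z - Vfull blk eucl B L u z) - Vfull blk eucl B L a u)" .
    have "Vfull blk eucl B L u zt \<le> (\<Sum>i\<in>UNIV. L i * (t\<^sup>2 * Cb i u z))"
      unfolding Vfull_def zt_def using L_pos V_small[OF uQ zQ eu] t
      by (intro sum_mono mult_left_mono) (auto simp: less_imp_le)
    also have "\<dots> = t\<^sup>2 * C" by (simp add: C_def sum_distrib_left algebra_simps)
    finally have S: "Vfull blk eucl B L u zt \<le> t\<^sup>2 * C" .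
    have Gz: "G \<bullet> zt = G \<bullet> u + t * (G \<bullet> (z - u))" by (simp add: zt_def inner_add_right)
    have "Vfull blk eucl B L a u + G \<bullet> u \<le> Vfull blk eucl B L a zt + G \<bullet> zt"
      using m ztQ by (simp add: ismin_def)
    hence "0 \<le> t\<^sup>2 * C + t * X" using D S Gz unfolding X_def by (simp add: algebra_simps)
    hence "0 \<le> t * (t * C + X)" by (simp add: power2_eq_square algebra_simps)
    thus ?thesis using t by (simp add: zero_le_mult_iff)
  qed
  have "X \<ge> 0"
  proof (rule ccontr)
    assume "\<not> X \<ge> 0"
    hence Xn: "X < 0" by simp
    define t where "t = min 1 (- X / (2 * (\<bar>C\<bar> + 1)))"
    have "2 * (\<bar>C\<bar> + 1) > 0" by (simp add: add_pos_nonneg)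
    hence "- X / (2 * (\<bar>C\<bar> + 1)) > 0" using Xn by (intro divide_pos_pos) auto
    hence tp: "t > 0" "t \<le> 1" by (auto simp: t_def)
    have "t * C \<le> t * \<bar>C\<bar>" using tp by (intro mult_left_mono) auto
    also have "\<dots> \<le> (- X / (2 * (\<bar>C\<bar> + 1))) * \<bar>C\<bar>" by (intro mult_right_mono) (auto simp: t_def)
    also have "\<dots> \<le> - X / 2"
    proof -
      have "(- X / (2 * (\<bar>C\<bar> + 1))) * \<bar>C\<bar> = (- X / 2) * (\<bar>C\<bar> / (\<bar>C\<bar> + 1))" by (simp add: field_simps)
      also have "\<dots> \<le> (- X / 2) * 1" using Xn by (intro mult_left_mono) auto
      finally show ?thesis by simp
    qed
    finally have "t * C + X < 0" using Xn by simp
    thus False using key[OF tp] by simp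
  qed
  thus ?thesis unfolding X_def by simp
qed

lemma block_min:
  assumes m: "ismin a G u" and w: "blockpart blk i w \<in> Qblk blk eucl QE i"
  shows "L i * Vblk blk eucl B i a u + blockpart blk i G \<bullet> u \<le> L i * Vblk blk eucl B i a w + blockpart blk i G \<bullet> w"
proof -
  have uQ: "u \<in> Q" using m by (simp add: ismin_def)
  have zQ: "repl blk i u w \<in> Q" by (rule repl_Q[OF uQ w])
  have "Vfull blk eucl B L a u + G \<bullet> u \<le> Vfull blk eucl B L a (repl blk i u w) + G \<bullet> repl blk i u w"
    using m zQ by (simp add: ismin_def)
  moreover have "G \<bullet> repl blk i u w = G \<bullet> u - blockpart blk i G \<bullet> u + blockpart blk i G \<bullet> w"
    by (simp add: repl_def inner_diff_right inner_add_right inner_bp_sym(1))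
  ultimately show ?thesis by (simp add: Vfull_repl)
qed

lemma other_blocks:
  assumes aQ: "a \<in> Q" and ea: "entpos a" and m: "ismin a G u" and G0: "blockpart blk i G = 0"
  shows "blockpart blk i u = blockpart blk i a"
proof -
  have uQ: "u \<in> Q" using m by (simp add: ismin_def)
  have "blockpart blk i a \<in> Qblk blk eucl QE i" using aQ Q_iff by blast
  from block_min[OF m this] G0
  have "L i * Vblk blk eucl B i a u \<le> L i * Vblk blk eucl B i a a" by simp
  hence "Vblk blk eucl B i a u \<le> 0" using L_pos by (simp add: Vblk_self mult_le_0_iff less_imp_le) (smt (verit) L_pos)
  moreover have "Vblk blk eucl B i a u \<ge> (bnorm blk eucl B i (u - a))\<^sup>2 / 2" by (rule SC[OF uQ aQ ea])
  ultimately have "(bnorm blk eucl B i (u - a))\<^sup>2 \<le> 0" by linarith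
  hence "bnorm blk eucl B i (u - a) = 0" by simp
  hence "blockpart blk i (u - a) = 0" by (rule bnorm_zero)
  thus ?thesis by (simp add: bp_diff)
qed

lemma block_nonempty: "{c. blk c = i} \<noteq> {}"
  using blk_surj by (metis (mono_tags, lifting) empty_Collect_eq surjD)

lemma positivity:
  assumes aQ: "a \<in> Q" and ea: "entpos a" and m: "ismin a G u" and ne: "\<not> eucl i"
  shows "\<forall>c. blk c = i \<longrightarrow> u $ c > 0"
proof -
  have uQ: "u \<in> Q" using m by (simp add: ismin_def)
  define S where "S = {c. blk c = i}"
  have fS: "finite S" and neS: "S \<noteq> {}" using block_nonempty[of i] by (auto simp: S_def)
  have apos: "a $ c > 0" if "c \<in> S" for c using ea ne that by (auto simp: entpos_def S_def)
  define e where "e c = a $ c * exp (- (G $ c) / L i)" for c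
  have epos: "e c > 0" if "c \<in> S" for c using apos[OF that] by (simp add: e_def)
  define Z where "Z = (\<Sum>c\<in>S. e c)"
  have Zpos: "Z > 0" unfolding Z_def using fS neS epos by (intro sum_pos) auto
  define W :: "real^'c" where "W = (\<chi> c. if blk c = i then e c / Z else 0)"
  have Wpos: "W $ c > 0" if "c \<in> S" for c using that epos Zpos by (simp add: W_def S_def)
  have sW: "(\<Sum>c\<in>S. W $ c) = 1"
  proof -
    have "(\<Sum>c\<in>S. W $ c) = (\<Sum>c\<in>S. e c / Z)" by (intro sum.cong) (auto simp: W_def S_def)
    also have "\<dots> = 1" using Zpos by (simp add: sum_divide_distrib[symmetric] Z_def)
    finally show ?thesis .
  qed
  have WS: "blockpart blk i W \<in> Qblk blk eucl QE i"
  proof -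
    have "blockpart blk i W = W" by (simp add: vec_eq_iff W_def)
    moreover have "W \<in> simplex_blk blk i"
      unfolding simplex_blk_def blkspace_def using sW Wpos epos Zpos
      by (auto simp: W_def S_def less_imp_le)
    ultimately show ?thesis using ne by (simp add: Qblk_def)
  qed
  have ident: "L i * Vblk blk eucl B i a x + blockpart blk i G \<bullet> x = L i * (\<Sum>c\<in>S. x $ c * ln (x $ c / W $ c)) - L i * ln Z"
    if x0: "\<forall>c\<in>S. x $ c \<ge> 0" and x1: "(\<Sum>c\<in>S. x $ c) = 1" for x
  proof -
    have pc: "x $ c * ln (x $ c / W $ c) = x $ c * ln (x $ c / a $ c) + x $ c * G $ c / L i + x $ c * ln Z"
      if c: "c \<in> S" for c
    proof (cases "x $ c = 0")
      case False
      hence xp: "x $ c > 0" using x0 c by (simp add: less_le)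
      have "W $ c = a $ c * exp (- (G $ c) / L i) / Z" using c by (simp add: W_def S_def e_def)
      hence "ln (W $ c) = ln (a $ c) - G $ c / L i - ln Z"
        using apos[OF c] Zpos by (simp add: ln_div ln_mult)
      moreover have "ln (x $ c / W $ c) = ln (x $ c) - ln (W $ c)" using xp Wpos[OF c] by (simp add: ln_div)
      moreover have "ln (x $ c / a $ c) = ln (x $ c) - ln (a $ c)" using xp apos[OF c] by (simp add: ln_div)
      ultimately have "ln (x $ c / W $ c) = ln (x $ c / a $ c) + G $ c / L i + ln Z" by linarith
      thus ?thesis by (simp add: distrib_left)
    qed simp
    have "(\<Sum>c\<in>S. x $ c * ln (x $ c / W $ c)) = (\<Sum>c\<in>S. x $ c * ln (x $ c / a $ c)) + (\<Sum>c\<in>S. G $ c * x $ c) / L i + ln Z * (\<Sum>c\<in>S. x $ c)"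
      by (simp add: pc sum.distrib sum_divide_distrib[symmetric] sum_distrib_left mult.commute)
    also have "\<dots> = Vblk blk eucl B i a x + (blockpart blk i G \<bullet> x) / L i + ln Z"
      using ne x1 by (simp add: Vblk_ent inner_bp S_def)
    moreover have "L i > 0" using L_pos by blast
    ultimately show ?thesis by (simp add: field_simps)
  qed
  have u0: "\<forall>c\<in>S. u $ c \<ge> 0" "(\<Sum>c\<in>S. u $ c) = 1" using Q_ent[OF uQ ne] by (auto simp: S_def)
  have W0: "\<forall>c\<in>S. W $ c \<ge> 0" using Wpos by (simp add: less_imp_le)
  have WW: "(\<Sum>c\<in>S. W $ c * ln (W $ c / W $ c)) = 0" by (intro sum.neutral) auto
  from block_min[OF m WS] ident[OF u0] ident[OF W0 sW] WW
  have "L i * (\<Sum>c\<in>S. u $ c * ln (u $ c / W $ c)) \<le> 0" by simp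
  hence KL: "(\<Sum>c\<in>S. u $ c * ln (u $ c / W $ c)) \<le> 0" using L_pos by (simp add: mult_le_0_iff) (smt (verit) L_pos)
  have "(\<Sum>c\<in>S. \<bar>u $ c - W $ c\<bar>)^2 \<le> 2 * (\<Sum>c\<in>S. u $ c * ln (u $ c / W $ c))"
    using fS u0 Wpos sW by (intro pinsker_sum) auto
  with KL have "(\<Sum>c\<in>S. \<bar>u $ c - W $ c\<bar>)^2 \<le> 0" by linarith
  hence "(\<Sum>c\<in>S. \<bar>u $ c - W $ c\<bar>) = 0" by simp
  hence "\<forall>c\<in>S. \<bar>u $ c - W $ c\<bar> = 0" using fS by (subst sum_nonneg_eq_0_iff[symmetric]) auto
  thus ?thesis using Wpos by (auto simp: S_def)
qed

lemma ismin_entpos: "a \<in> Q \<Longrightarrow> entpos a \<Longrightarrow> ismin a G u \<Longrightarrow> entpos u"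
  unfolding entpos_def
proof (intro allI impI)
  fix c assume "a \<in> Q" "\<forall>c. \<not> eucl (blk c) \<longrightarrow> 0 < a $ c" "ismin a G u" "\<not> eucl (blk c)"
  thus "0 < u $ c" using positivity[of a G u "blk c"] by (simp add: entpos_def)
qed

lemma ismin_unique:
  assumes aQ: "a \<in> Q" and ea: "entpos a" and m1: "ismin a G u" and m2: "ismin a G u'"
  shows "u' = u"
proof -
  have uQ: "u \<in> Q" and u'Q: "u' \<in> Q" using m1 m2 by (auto simp: ismin_def)
  have eu: "entpos u" by (rule ismin_entpos[OF aQ ea m1])
  have "Vfull blk eucl B L u u' \<le> Vfull blk eucl B L a u' - Vfull blk eucl B L a u + G \<bullet> (u' - u)"
    by (rule three_point[OF aQ ea eu m1 u'Q])
  also have "\<dots> \<le> 0"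
  proof -
    have "Vfull blk eucl B L a u' + G \<bullet> u' \<le> Vfull blk eucl B L a u + G \<bullet> u"
      using m2 uQ unfolding ismin_def by blast
    thus ?thesis by (simp add: inner_diff_right)
  qed
  finally have V0: "Vfull blk eucl B L u u' \<le> 0" .
  have "blockpart blk i (u' - u) = 0" for i
  proof -
    have "Vfull blk eucl B L u u' \<ge> L i * (bnorm blk eucl B i (u' - u))\<^sup>2 / 2" by (rule Vfull_ge[OF u'Q uQ eu])
    with V0 have "L i * (bnorm blk eucl B i (u' - u))\<^sup>2 \<le> 0" by simp
    hence "(bnorm blk eucl B i (u' - u))\<^sup>2 \<le> 0" using L_pos by (simp add: mult_le_0_iff) (smt (verit) L_pos zero_le_power2)
    hence "bnorm blk eucl B i (u' - u) = 0" by simp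
    thus ?thesis by (rule bnorm_zero)
  qed
  hence "u' - u = 0" using bp_sum[of blk "u' - u"] by simp
  thus ?thesis by simp
qed

end

lemma line_deriv:
  fixes f :: "real^'c::finite \<Rightarrow> real"
  assumes fg: "\<forall>z. (f has_derivative (\<lambda>h. grad z \<bullet> h)) (at z)"
  shows "((\<lambda>t. f (y + t *\<^sub>R w)) has_real_derivative (grad (y + t *\<^sub>R w) \<bullet> w)) (at t)"
proof -
  have l: "((\<lambda>t. y + t *\<^sub>R w) has_derivative (\<lambda>s. s *\<^sub>R w)) (at t)"
    by (auto intro!: derivative_eq_intros)
  have "((\<lambda>t. f (y + t *\<^sub>R w)) has_derivative (\<lambda>s. grad (y + t *\<^sub>R w) \<bullet> (s *\<^sub>R w))) (at t)"
    using has_derivative_compose[OF l fg[rule_format, of "y + t *\<^sub>R w"]] by (simp add: o_def)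
  moreover have "(\<lambda>s. grad (y + t *\<^sub>R w) \<bullet> (s *\<^sub>R w)) = (*) (grad (y + t *\<^sub>R w) \<bullet> w)"
    by (auto simp: fun_eq_iff)
  ultimately show ?thesis by (simp add: has_field_derivative_def)
qed

lemma grad_ineq:
  fixes f :: "real^'c::finite \<Rightarrow> real"
  assumes cf: "convex_on UNIV f" and fg: "\<forall>z. (f has_derivative (\<lambda>h. grad z \<bullet> h)) (at z)"
  shows "f z \<ge> f y + grad y \<bullet> (z - y)"
proof -
  define \<psi> where "\<psi> t = f (y + t *\<^sub>R (z - y))" for t :: real
  have cpsi: "convex_on UNIV \<psi>"
  proof (rule convex_onI)
    fix t x1 x2 :: real assume t: "0 < t" "t < 1"
    have "y + ((1 - t) *\<^sub>R x1 + t *\<^sub>R x2) *\<^sub>R (z - y) = (1 - t) *\<^sub>R (y + x1 *\<^sub>R (z - y)) + t *\<^sub>R (y + x2 *\<^sub>R (z - y))"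
      by (simp add: algebra_simps)
    thus "\<psi> ((1 - t) *\<^sub>R x1 + t *\<^sub>R x2) \<le> (1 - t) * \<psi> x1 + t * \<psi> x2"
      unfolding \<psi>_def using convex_onD[OF cf, of t] t by simp
  qed simp
  have d: "(\<psi> has_field_derivative (grad y \<bullet> (z - y))) (at 0 within UNIV)"
    unfolding \<psi>_def using line_deriv[OF fg, of y "z - y" 0] by simp
  have "\<psi> 1 - \<psi> 0 \<ge> (grad y \<bullet> (z - y)) * (1 - 0)"
    by (rule convex_on_imp_above_tangent[OF cpsi _ _ _ d]) auto
  thus ?thesis by (simp add: \<psi>_def)
qed

context rs begin

lemma descent:
  fixes f :: "real^'c \<Rightarrow> real"
  assumes fg: "\<forall>z. (f has_derivative (\<lambda>h. grad z \<bullet> h)) (at z)"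
    and lip: "\<forall>i z h. z \<in> Q \<and> h \<in> blkspace blk i \<and> z + h \<in> Q \<longrightarrow>
                      dnorm blk eucl B i (grad (z + h) - grad z) \<le> L i * bnorm blk eucl B i h"
    and zQ: "z \<in> Q" and zhQ: "z + h \<in> Q" and hb: "h \<in> blkspace blk i"
  shows "f (z + h) \<le> f z + grad z \<bullet> h + L i / 2 * (bnorm blk eucl B i h)\<^sup>2"
proof -
  define b where "b = bnorm blk eucl B i h"
  define \<phi> where "\<phi> t = f (z + t *\<^sub>R h) - t * (grad z \<bullet> h) - L i * t\<^sup>2 * b\<^sup>2 / 2" for t
  have dphi: "(\<phi> has_real_derivative (grad (z + t *\<^sub>R h) \<bullet> h - grad z \<bullet> h - L i * t * b\<^sup>2)) (at t)" for t
    unfolding \<phi>_def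
    by (rule derivative_eq_intros line_deriv[OF fg] refl | simp add: power2_eq_square)+
  have nonpos: "grad (z + t *\<^sub>R h) \<bullet> h - grad z \<bullet> h - L i * t * b\<^sup>2 \<le> 0" if t: "0 < t" "t < 1" for t
  proof -
    have zt: "z + t *\<^sub>R h \<in> Q"
    proof -
      have "z + t *\<^sub>R h = (1 - t) *\<^sub>R z + t *\<^sub>R (z + h)" by (simp add: algebra_simps)
      thus ?thesis using Q_conv[OF zQ zhQ, of "1 - t" t] t by simp
    qed
    have "dnorm blk eucl B i (grad (z + t *\<^sub>R h) - grad z) \<le> L i * bnorm blk eucl B i (t *\<^sub>R h)"
      using lip zQ zt hb blkspace_scale[OF hb, of t] by blast
    also have "\<dots> = L i * t * b" using t by (simp add: bnorm_scale b_def)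
    finally have dn: "dnorm blk eucl B i (grad (z + t *\<^sub>R h) - grad z) \<le> L i * t * b" .
    have "grad (z + t *\<^sub>R h) \<bullet> h - grad z \<bullet> h = blockpart blk i (grad (z + t *\<^sub>R h) - grad z) \<bullet> h"
      using bp_id[OF hb] by (simp add: inner_bp_sym(1) inner_diff_left)
    also have "\<dots> \<le> dnorm blk eucl B i (grad (z + t *\<^sub>R h) - grad z) * b"
      unfolding b_def by (rule dnorm_ineq)
    also have "\<dots> \<le> L i * t * b * b"
      using dn bnorm_nonneg[of i h] by (intro mult_right_mono) (auto simp: b_def)
    finally show ?thesis by (simp add: power2_eq_square)
  qed
  have cont: "continuous_on {0..1} \<phi>"
    using dphi by (intro continuous_at_imp_continuous_on ballI DERIV_isCont) blast
  have "\<phi> 1 \<le> \<phi> 0"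
  proof (rule DERIV_nonpos_imp_decreasing_open[of 0 1 \<phi>])
    fix x :: real assume "0 < x" "x < 1"
    thus "\<exists>y. (\<phi> has_real_derivative y) (at x) \<and> y \<le> 0" using dphi[of x] nonpos[of x] by blast
  qed (use cont in auto)
  thus ?thesis by (simp add: \<phi>_def b_def)
qed

end

definition rroot :: "real \<Rightarrow> real \<Rightarrow> real" where
  "rroot \<rho> A = (1 + sqrt (1 + 4 * \<rho>\<^sup>2 * A)) / (2 * \<rho>\<^sup>2)"

lemma rroot_eq: assumes "\<rho> \<ge> 1" "A \<ge> 0" shows "A + rroot \<rho> A = \<rho>\<^sup>2 * (rroot \<rho> A)\<^sup>2"
proof -
  define s where "s = sqrt (1 + 4 * \<rho>\<^sup>2 * A)"
  have s2: "s\<^sup>2 = 1 + 4 * \<rho>\<^sup>2 * A" using assms by (simp add: s_def)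
  have "\<rho>\<^sup>2 * (rroot \<rho> A)\<^sup>2 = (1 + s)\<^sup>2 / (4 * \<rho>\<^sup>2)" using assms
    by (simp add: rroot_def s_def power_divide field_simps power2_eq_square)
  also have "\<dots> = (1 + 2 * s + s\<^sup>2) / (4 * \<rho>\<^sup>2)" by (simp add: power2_eq_square algebra_simps)
  also have "\<dots> = A + rroot \<rho> A" unfolding s2 using assms
    by (simp add: rroot_def s_def field_simps power2_eq_square)
  finally show ?thesis by simp
qed

lemma rroot_nonneg: "\<rho> \<ge> 1 \<Longrightarrow> A \<ge> 0 \<Longrightarrow> rroot \<rho> A \<ge> 0"
  unfolding rroot_def by (intro divide_nonneg_nonneg add_nonneg_nonneg) auto

lemma rroot_greatest: assumes "\<rho> \<ge> 1" "A \<ge> 0" shows "(GREATEST a. A + a = \<rho>\<^sup>2 * a\<^sup>2) = rroot \<rho> A"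
proof (rule Greatest_equality)
  show "A + rroot \<rho> A = \<rho>\<^sup>2 * (rroot \<rho> A)\<^sup>2" by (rule rroot_eq[OF assms])
next
  fix y assume y: "A + y = \<rho>\<^sup>2 * y\<^sup>2"
  have "(2 * \<rho>\<^sup>2 * y - 1)\<^sup>2 = 4 * \<rho>\<^sup>2 * (\<rho>\<^sup>2 * y\<^sup>2) - 4 * \<rho>\<^sup>2 * y + 1"
    by (simp add: power2_eq_square algebra_simps)
  also have "\<dots> = 4 * \<rho>\<^sup>2 * (A + y) - 4 * \<rho>\<^sup>2 * y + 1" using y by simp
  also have "\<dots> = 1 + 4 * \<rho>\<^sup>2 * A" by (simp add: algebra_simps)
  finally have "(2 * \<rho>\<^sup>2 * y - 1)\<^sup>2 = 1 + 4 * \<rho>\<^sup>2 * A" .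
  hence "2 * \<rho>\<^sup>2 * y - 1 \<le> sqrt (1 + 4 * \<rho>\<^sup>2 * A)"
    by (metis real_sqrt_abs abs_ge_self)
  thus "y \<le> rroot \<rho> A" using assms by (simp add: rroot_def field_simps)
qed

declare rstm_A.simps(2)[simp del] rstm_alpha.simps(2)[simp del]

locale seq =
  fixes \<rho> :: real
  assumes rho1: "\<rho> \<ge> 1"
begin

abbreviation "A \<equiv> rstm_A \<rho>"
abbreviation "\<alpha> \<equiv> rstm_alpha \<rho>"

lemma A0: "A 0 = 1 - 1 / \<rho>" by simp

lemma A_nonneg: "A k \<ge> 0"
proof (induction k)
  case 0 thus ?case using rho1 by (simp add: field_simps)
next
  case (Suc k)
  have "rroot \<rho> (A k) \<ge> 0" using rho1 Suc by (intro rroot_nonneg)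
  thus ?case using Suc rroot_greatest[OF rho1 Suc] by (simp add: rstm_A.simps(2))
qed

lemma alpha_Suc: "\<alpha> (Suc k) = rroot \<rho> (A k)"
  using rroot_greatest[OF rho1 A_nonneg] by (simp add: rstm_alpha.simps(2))

lemma A_Suc: "A (Suc k) = A k + \<alpha> (Suc k)"
  by (simp add: rstm_A.simps(2) rstm_alpha.simps(2))

lemma A_eq: "A (Suc k) = \<rho>\<^sup>2 * (\<alpha> (Suc k))\<^sup>2"
  using rroot_eq[OF rho1 A_nonneg[of k]] by (simp add: A_Suc alpha_Suc)

lemma A_ge0: "A k \<ge> 1 - 1 / \<rho>"
proof (induction k)
  case (Suc k)
  have "\<alpha> (Suc k) \<ge> 0" using rho1 A_nonneg[of k] by (simp add: alpha_Suc rroot_nonneg)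
  thus ?case using Suc by (simp add: A_Suc)
qed simp

lemma rho_alpha: "\<rho> * \<alpha> (Suc k) \<ge> 1"
proof -
  have "4 * \<rho>\<^sup>2 * A k \<ge> 4 * \<rho>\<^sup>2 * (1 - 1 / \<rho>)" using A_ge0[of k] by (intro mult_left_mono) auto
  also have "4 * \<rho>\<^sup>2 * (1 - 1 / \<rho>) = (2 * \<rho> - 1)\<^sup>2 - 1" using rho1 by (simp add: field_simps power2_eq_square)
  finally have "1 + 4 * \<rho>\<^sup>2 * A k \<ge> (2 * \<rho> - 1)\<^sup>2" by simp
  hence "sqrt (1 + 4 * \<rho>\<^sup>2 * A k) \<ge> 2 * \<rho> - 1"
    using rho1 by (metis real_sqrt_le_mono real_sqrt_abs abs_of_nonneg diff_ge_0_iff_ge mult_2 add_increasing2 order_trans zero_le_one)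
  hence "\<alpha> (Suc k) \<ge> (2 * \<rho>) / (2 * \<rho>\<^sup>2)" using rho1 unfolding alpha_Suc rroot_def
    by (intro divide_right_mono) auto
  thus ?thesis using rho1 by (simp add: field_simps power2_eq_square)
qed

lemma alpha_pos: "\<alpha> (Suc k) > 0"
proof (rule ccontr)
  assume "\<not> \<alpha> (Suc k) > 0"
  hence "\<alpha> (Suc k) \<le> 0" by simp
  hence "\<rho> * \<alpha> (Suc k) \<le> 0" using rho1 by (simp add: mult_nonneg_nonpos)
  thus False using rho_alpha[of k] by simp
qed

lemma A_pos: "A (Suc k) > 0"
  using A_nonneg[of k] alpha_pos[of k] by (simp add: A_Suc)

lemma alpha_step: "\<alpha> (Suc (Suc k)) \<le> \<alpha> (Suc k) + 1 / \<rho>\<^sup>2"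
proof -
  have a: "\<alpha> (Suc k) \<ge> 0" using alpha_pos[of k] by simp
  have "1 + 4 * \<rho>\<^sup>2 * A (Suc k) = 1 + (2 * \<rho>\<^sup>2 * \<alpha> (Suc k))\<^sup>2" by (simp add: A_eq power2_eq_square algebra_simps)
  moreover have "1 + (2 * \<rho>\<^sup>2 * \<alpha> (Suc k))\<^sup>2 \<le> (1 + 2 * \<rho>\<^sup>2 * \<alpha> (Suc k))\<^sup>2"
    using a rho1 by (simp add: power2_eq_square algebra_simps)
  ultimately have "sqrt (1 + 4 * \<rho>\<^sup>2 * A (Suc k)) \<le> sqrt ((1 + 2 * \<rho>\<^sup>2 * \<alpha> (Suc k))\<^sup>2)"
    by (intro real_sqrt_le_mono) simp
  moreover have "1 + 2 * \<rho>\<^sup>2 * \<alpha> (Suc k) \<ge> 0" using a by simp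
  ultimately have "sqrt (1 + 4 * \<rho>\<^sup>2 * A (Suc k)) \<le> 1 + 2 * \<rho>\<^sup>2 * \<alpha> (Suc k)" by simp
  hence "\<alpha> (Suc (Suc k)) \<le> (2 + 2 * \<rho>\<^sup>2 * \<alpha> (Suc k)) / (2 * \<rho>\<^sup>2)"
    unfolding alpha_Suc[of "Suc k"] rroot_def using rho1 by (intro divide_right_mono) auto
  thus ?thesis using rho1 by (simp add: field_simps power2_eq_square)
qed

lemma alpha_ratio: "(\<rho> - 1) * \<alpha> (Suc (Suc k)) \<le> \<rho> * \<alpha> (Suc k)"
proof -
  have "(\<rho> - 1) * \<alpha> (Suc (Suc k)) \<le> (\<rho> - 1) * (\<alpha> (Suc k) + 1 / \<rho>\<^sup>2)"
    using alpha_step rho1 by (intro mult_left_mono) auto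
  also have "\<dots> \<le> \<rho> * \<alpha> (Suc k)"
  proof -
    have "(\<rho> - 1) / \<rho>\<^sup>2 \<le> 1 / \<rho>" using rho1 by (simp add: field_simps power2_eq_square)
    also have "1 / \<rho> \<le> \<alpha> (Suc k)" using rho_alpha[of k] rho1 by (simp add: field_simps)
    finally show ?thesis by (simp add: algebra_simps)
  qed
  finally show ?thesis .
qed

lemma alpha_ratio0: "(\<rho> - 1) * \<alpha> (Suc 0) \<le> A 0"
proof -
  have "1 + 4 * \<rho>\<^sup>2 * A 0 = (2 * \<rho> - 1)\<^sup>2" using rho1 by (simp add: field_simps power2_eq_square)
  hence "sqrt (1 + 4 * \<rho>\<^sup>2 * A 0) = 2 * \<rho> - 1" using rho1 by simp
  hence "\<alpha> (Suc 0) = 1 / \<rho>" using rho1 unfolding alpha_Suc rroot_def by (simp add: field_simps power2_eq_square)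
  thus ?thesis using rho1 by (simp add: field_simps)
qed

lemma sqrtA_lower: "sqrt (A (Suc k)) \<ge> sqrt (A k) + 1 / (2 * \<rho>)"
proof -
  have "sqrt (1 + 4 * \<rho>\<^sup>2 * A k) \<ge> sqrt (4 * \<rho>\<^sup>2 * A k)" by simp
  also have "sqrt (4 * \<rho>\<^sup>2 * A k) = 2 * \<rho> * sqrt (A k)" using rho1 by (simp add: real_sqrt_mult)
  finally have "\<alpha> (Suc k) \<ge> (1 + 2 * \<rho> * sqrt (A k)) / (2 * \<rho>\<^sup>2)"
    unfolding alpha_Suc rroot_def using rho1 by (intro divide_right_mono) auto
  hence "A (Suc k) \<ge> A k + (1 + 2 * \<rho> * sqrt (A k)) / (2 * \<rho>\<^sup>2)" by (simp add: A_Suc)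
  moreover have "A k + (1 + 2 * \<rho> * sqrt (A k)) / (2 * \<rho>\<^sup>2) \<ge> (sqrt (A k) + 1 / (2 * \<rho>))\<^sup>2"
    using rho1 A_nonneg[of k] by (simp add: power2_eq_square field_simps)
  ultimately have "(sqrt (A k) + 1 / (2 * \<rho>))\<^sup>2 \<le> A (Suc k)" by linarith
  hence "sqrt ((sqrt (A k) + 1 / (2 * \<rho>))\<^sup>2) \<le> sqrt (A (Suc k))" by (rule real_sqrt_le_mono)
  thus ?thesis using rho1 by simp
qed

lemma sqrtA_upper: "sqrt (A (Suc k)) \<le> sqrt (A k) + 1 / \<rho>"
proof -
  have "sqrt (1 + 4 * \<rho>\<^sup>2 * A k) \<le> 1 + 2 * \<rho> * sqrt (A k)"
  proof -
    have "1 + 4 * \<rho>\<^sup>2 * A k \<le> (1 + 2 * \<rho> * sqrt (A k))\<^sup>2"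
      using rho1 A_nonneg[of k] by (simp add: power2_eq_square algebra_simps)
    hence "sqrt (1 + 4 * \<rho>\<^sup>2 * A k) \<le> sqrt ((1 + 2 * \<rho> * sqrt (A k))\<^sup>2)" by (rule real_sqrt_le_mono)
    moreover have "1 + 2 * \<rho> * sqrt (A k) \<ge> 0" using rho1 A_nonneg[of k] by simp
    ultimately show ?thesis by simp
  qed
  hence "\<alpha> (Suc k) \<le> (2 + 2 * \<rho> * sqrt (A k)) / (2 * \<rho>\<^sup>2)"
    unfolding alpha_Suc rroot_def using rho1 by (intro divide_right_mono) auto
  hence "A (Suc k) \<le> A k + (2 + 2 * \<rho> * sqrt (A k)) / (2 * \<rho>\<^sup>2)" by (simp add: A_Suc)
  also have "\<dots> \<le> (sqrt (A k) + 1 / \<rho>)\<^sup>2"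
    using rho1 A_nonneg[of k] by (simp add: power2_eq_square field_simps)
  finally have "sqrt (A (Suc k)) \<le> sqrt ((sqrt (A k) + 1 / \<rho>)\<^sup>2)" by (rule real_sqrt_le_mono)
  moreover have "sqrt (A k) + 1 / \<rho> \<ge> 0" using rho1 A_nonneg[of k] by simp
  ultimately show ?thesis by simp
qed

lemma A1: "A (Suc 0) = 1"
proof -
  have "1 + 4 * \<rho>\<^sup>2 * A 0 = (2 * \<rho> - 1)\<^sup>2" using rho1 by (simp add: field_simps power2_eq_square)
  hence "sqrt (1 + 4 * \<rho>\<^sup>2 * A 0) = 2 * \<rho> - 1" using rho1 by simp
  hence "\<alpha> (Suc 0) = 1 / \<rho>" using rho1 unfolding alpha_Suc rroot_def by (simp add: field_simps power2_eq_square)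
  thus ?thesis using rho1 by (simp add: A_Suc field_simps)
qed

lemma A_lower: "k \<ge> 1 \<Longrightarrow> A k \<ge> (real k - 1 + 2 * \<rho>)\<^sup>2 / (4 * \<rho>\<^sup>2)"
proof (induction k rule: nat_induct_at_least)
  case base thus ?case using rho1 A1 by (simp add: field_simps power2_eq_square)
next
  case (Suc k)
  have "sqrt (A k) \<ge> (real k - 1 + 2 * \<rho>) / (2 * \<rho>)"
  proof -
    have "sqrt ((real k - 1 + 2 * \<rho>)\<^sup>2 / (4 * \<rho>\<^sup>2)) \<le> sqrt (A k)" using Suc.IH by (rule real_sqrt_le_mono)
    moreover have "sqrt ((real k - 1 + 2 * \<rho>)\<^sup>2 / (4 * \<rho>\<^sup>2)) = (real k - 1 + 2 * \<rho>) / (2 * \<rho>)"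
      using rho1 Suc.hyps by (simp add: real_sqrt_divide real_sqrt_mult)
    ultimately show ?thesis by simp
  qed
  hence "sqrt (A (Suc k)) \<ge> (real (Suc k) - 1 + 2 * \<rho>) / (2 * \<rho>)"
    using sqrtA_lower[of k] rho1 by (simp add: field_simps)
  hence "(sqrt (A (Suc k)))\<^sup>2 \<ge> ((real (Suc k) - 1 + 2 * \<rho>) / (2 * \<rho>))\<^sup>2"
    using rho1 by (intro power_mono) auto
  thus ?case using A_nonneg by (simp add: power_divide power_mult_distrib)
qed

lemma A_upper: "k \<ge> 1 \<Longrightarrow> A k \<le> (real k - 1 + \<rho>)\<^sup>2 / \<rho>\<^sup>2"
proof (induction k rule: nat_induct_at_least)
  case base thus ?case using rho1 A1 by simp
next
  case (Suc k)
  have "sqrt (A k) \<le> (real k - 1 + \<rho>) / \<rho>"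
  proof -
    have "sqrt (A k) \<le> sqrt ((real k - 1 + \<rho>)\<^sup>2 / \<rho>\<^sup>2)" using Suc.IH by (rule real_sqrt_le_mono)
    moreover have "sqrt ((real k - 1 + \<rho>)\<^sup>2 / \<rho>\<^sup>2) = (real k - 1 + \<rho>) / \<rho>"
      using rho1 Suc.hyps by (simp add: real_sqrt_divide)
    ultimately show ?thesis by simp
  qed
  hence s: "sqrt (A (Suc k)) \<le> (real (Suc k) - 1 + \<rho>) / \<rho>"
    using sqrtA_upper[of k] rho1 by (simp add: field_simps)
  have "A (Suc k) = (sqrt (A (Suc k)))\<^sup>2" using A_nonneg[of "Suc k"] by simp
  also have "\<dots> \<le> ((real (Suc k) - 1 + \<rho>) / \<rho>)\<^sup>2" using s A_nonneg[of "Suc k"] by (intro power_mono) auto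
  finally show ?case by (simp add: power_divide)
qed

lemma sum_alpha: "(\<Sum>j\<in>{1..k}. \<alpha> j) = A k - A 0"
  by (induction k) (auto simp: A_Suc)

end

definition PP :: "nat \<Rightarrow> (nat \<Rightarrow> 'b::finite) pmf" where
  "PP k = Pi_pmf {..<k} undefined (\<lambda>_. pmf_of_set UNIV)"

abbreviation EE :: "nat \<Rightarrow> ((nat \<Rightarrow> 'b::finite) \<Rightarrow> real) \<Rightarrow> real" where
  "EE k F \<equiv> measure_pmf.expectation (PP k) F"

lemma PP_fin: "finite (set_pmf (PP k))"
  unfolding PP_def by (subst set_Pi_pmf) (auto intro!: finite_PiE_dflt)

lemma PP_int: "integrable (measure_pmf (PP k)) (F :: _ \<Rightarrow> real)"
  by (rule integrable_measure_pmf_finite[OF PP_fin])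

lemma E_const: "EE k (\<lambda>_. c) = c"
  by (simp add: measure_pmf.prob_space)

lemma E_0: "EE 0 F = F (\<lambda>_. undefined)"
  by (simp add: PP_def)

lemma E_add: "EE k (\<lambda>\<omega>. F \<omega> + G \<omega>) = EE k F + EE k G"
  by (rule Bochner_Integration.integral_add) (rule PP_int)+

lemma E_cmult: "EE k (\<lambda>\<omega>. c * F \<omega>) = c * EE k F"
  by simp

lemma E_mono: "(\<And>\<omega>. F \<omega> \<le> G \<omega>) \<Longrightarrow> EE k F \<le> EE k G"
  by (rule integral_mono) (auto intro: PP_int)

lemma E_sum: "EE k (\<lambda>\<omega>. \<Sum>i\<in>I. F i \<omega>) = (\<Sum>i\<in>I. EE k (F i))"
  by (rule Bochner_Integration.integral_sum) (rule PP_int)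

lemma E_step: "EE (Suc k) (F :: (nat \<Rightarrow> 'b::finite) \<Rightarrow> real) = (\<Sum>i\<in>UNIV. EE k (\<lambda>\<omega>. F (fun_upd \<omega> k i))) / real CARD('b)"
proof -
  have e: "{..<Suc k} = insert k {..<k}" by auto
  have "(PP (Suc k) :: (nat \<Rightarrow> 'b) pmf) = do {y \<leftarrow> pmf_of_set (UNIV :: 'b set); f \<leftarrow> PP k; return_pmf (f(k := y))}"
    unfolding PP_def e by (rule Pi_pmf_insert') auto
  also have "\<dots> = pmf_of_set UNIV \<bind> (\<lambda>y. map_pmf (\<lambda>f. f(k := y)) (PP k))"
    by (simp add: map_pmf_def)
  finally have PPe: "(PP (Suc k) :: (nat \<Rightarrow> 'b) pmf) = pmf_of_set UNIV \<bind> (\<lambda>y. map_pmf (\<lambda>f. f(k := y)) (PP k))" .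
  show ?thesis unfolding PPe
    by (subst pmf_expectation_bind_pmf_of_set) (auto simp: PP_fin divide_inverse mult.commute sum_distrib_left)
qed

lemma sqrt_am: "t \<ge> 0 \<Longrightarrow> s > 0 \<Longrightarrow> sqrt t \<le> (t / s + s) / 2"
proof -
  assume t: "t \<ge> 0" and s: "s > 0"
  have "0 \<le> (sqrt t - s)\<^sup>2" by simp
  hence "2 * s * sqrt t \<le> t + s\<^sup>2" using t by (simp add: power2_eq_square algebra_simps)
  hence "sqrt t \<le> (t + s\<^sup>2) / (2 * s)" using s by (simp add: field_simps)
  also have "(t + s\<^sup>2) / (2 * s) = (t / s + s) / 2" using s by (simp add: field_simps power2_eq_square)
  finally show ?thesis .
qed

lemma jensen_sqrt:
  assumes X0: "\<And>\<omega>. X \<omega> \<ge> 0"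
  shows "EE k (\<lambda>\<omega>. sqrt (X \<omega>)) \<le> sqrt (EE k X)"
proof -
  have EX0: "EE k X \<ge> 0" using E_mono[of "\<lambda>_. 0" X k] X0 E_const[of k 0] by simp
  have b: "EE k (\<lambda>\<omega>. sqrt (X \<omega>)) \<le> (EE k X / s + s) / 2" if s: "s > 0" for s
  proof -
    have "EE k (\<lambda>\<omega>. sqrt (X \<omega>)) \<le> EE k (\<lambda>\<omega>. (1 / (2 * s)) * X \<omega> + s / 2)"
      using sqrt_am[OF X0 s] by (intro E_mono) (simp add: field_simps)
    also have "\<dots> = (1 / (2 * s)) * EE k X + s / 2" by (simp add: E_add E_const)
    finally show ?thesis by (simp add: field_simps)
  qed
  show ?thesis
  proof (cases "EE k X > 0")
    case True
    have "EE k (\<lambda>\<omega>. sqrt (X \<omega>)) \<le> (EE k X / sqrt (EE k X) + sqrt (EE k X)) / 2" using b True by simp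
    also have "\<dots> = sqrt (EE k X)" using True by (simp add: field_simps)
    finally show ?thesis .
  next
    case False
    hence z: "EE k X = 0" using EX0 by simp
    show ?thesis
    proof (rule ccontr)
      assume "\<not> ?thesis"
      hence pos: "EE k (\<lambda>\<omega>. sqrt (X \<omega>)) > 0" using z by simp
      from b[OF pos] z show False using pos by simp
    qed
  qed
qed


lemma alg_p1:
  fixes M p c :: real
  assumes "M \<ge> 0" "p \<ge> 0" "c \<le> 36 / 100 * p" "M \<le> p\<^sup>2 + c * sqrt M"
  shows "M \<le> 3 / 2 * p\<^sup>2"
proof -
  define t where "t = sqrt M"
  have t0: "t \<ge> 0" and Mt: "M = t\<^sup>2" using assms(1) by (auto simp: t_def)
  have h1: "c * t \<le> 36 / 100 * p * t" using assms(3) t0 by (intro mult_right_mono) auto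
  have "0 \<le> (t - 12 / 10 * p)\<^sup>2" by simp
  hence h2: "36 / 100 * p * t \<le> 15 / 100 * t\<^sup>2 + 216 / 1000 * p\<^sup>2" by (simp add: power2_eq_square algebra_simps)
  have "M \<le> p\<^sup>2 + c * t" using assms(4) unfolding t_def .
  hence "t\<^sup>2 \<le> p\<^sup>2 + c * t" unfolding Mt .
  hence "t\<^sup>2 \<le> p\<^sup>2 + 15 / 100 * t\<^sup>2 + 216 / 1000 * p\<^sup>2" using h1 h2 by linarith
  hence "t\<^sup>2 \<le> 3 / 2 * p\<^sup>2" using zero_le_power2[of p] by linarith
  thus ?thesis using Mt by simp
qed

lemma alg_p2:
  fixes M P b :: real
  assumes "M \<ge> 0" "b \<ge> 0" "M \<le> P + b * sqrt M"
  shows "M \<le> 2 * P + b\<^sup>2"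
proof -
  define t where "t = sqrt M"
  have t0: "t \<ge> 0" and Mt: "M = t\<^sup>2" using assms(1) by (auto simp: t_def)
  have "0 \<le> (t - b)\<^sup>2" by simp
  hence "2 * (b * t) \<le> t\<^sup>2 + b\<^sup>2" by (simp add: power2_eq_square algebra_simps)
  moreover have "M \<le> P + b * t" using assms(3) unfolding t_def .
  ultimately show ?thesis unfolding Mt by linarith
qed

locale main = rs blk eucl QE B L
  for blk :: "'c::finite \<Rightarrow> 'b::finite" and eucl QE B L +
  fixes f :: "real^'c \<Rightarrow> real"
    and grad :: "real^'c \<Rightarrow> real^'c"
    and xstar u0 :: "real^'c"
    and \<xi> :: "nat \<Rightarrow> 'b \<Rightarrow> real^'c \<Rightarrow> real^'c"
    and \<Delta> :: real
    and u x y :: "nat \<Rightarrow> (nat \<Rightarrow> 'b) \<Rightarrow> real^'c"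
  assumes f_convex: "convex_on UNIV f"
    and f_grad: "\<forall>z. (f has_derivative (\<lambda>h. grad z \<bullet> h)) (at z)"
    and lipschitz: "\<forall>i z h. z \<in> Qprod blk eucl QE \<and> h \<in> blkspace blk i \<and> z + h \<in> Qprod blk eucl QE \<longrightarrow>
                      dnorm blk eucl B i (grad (z + h) - grad z) \<le> L i * bnorm blk eucl B i h"
    and xstar_min: "xstar \<in> Qprod blk eucl QE" "\<forall>z\<in>Qprod blk eucl QE. f xstar \<le> f z"
    and u0_Q: "u0 \<in> Qprod blk eucl QE"
    and u0_relint: "\<forall>i. \<not> eucl i \<longrightarrow> blockpart blk i u0 \<in> rel_interior (simplex_blk blk i)"
    and noise: "\<forall>j i z. z \<in> Qprod blk eucl QE \<longrightarrow> dnorm blk eucl B i (\<xi> j i z) \<le> \<Delta>"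
    and init: "\<forall>\<omega>. u 0 \<omega> = u0 \<and> x 0 \<omega> = u0 \<and> y 0 \<omega> = u0"
    and y_step: "\<forall>j \<omega>. y (Suc j) \<omega> = (1 / rstm_A (real CARD('b)) (Suc j)) *\<^sub>R (rstm_alpha (real CARD('b)) (Suc j) *\<^sub>R u j \<omega> + rstm_A (real CARD('b)) j *\<^sub>R x j \<omega>)"
    and u_step: "\<forall>j \<omega>. u (Suc j) \<omega> \<in> Qprod blk eucl QE \<and>
                   (\<forall>z\<in>Qprod blk eucl QE. Vfull blk eucl B L (u j \<omega>) (u (Suc j) \<omega>) + rstm_alpha (real CARD('b)) (Suc j) *
                            ((real CARD('b) *\<^sub>R blockpart blk (\<omega> j) (grad (y (Suc j) \<omega>) + \<xi> j (\<omega> j) (y (Suc j) \<omega>)))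
                               \<bullet> u (Suc j) \<omega>)
                        \<le> Vfull blk eucl B L (u j \<omega>) z + rstm_alpha (real CARD('b)) (Suc j) *
                            ((real CARD('b) *\<^sub>R blockpart blk (\<omega> j) (grad (y (Suc j) \<omega>) + \<xi> j (\<omega> j) (y (Suc j) \<omega>)))
                               \<bullet> z))"
    and x_step: "\<forall>j \<omega>. x (Suc j) \<omega> = y (Suc j) \<omega> + (real CARD('b) * rstm_alpha (real CARD('b)) (Suc j) / rstm_A (real CARD('b)) (Suc j)) *\<^sub>R (u (Suc j) \<omega> - u j \<omega>)"
begin

lemma n_ge1: "real CARD('b) \<ge> 1"
proof -
  have "CARD('b) > 0" by simp
  thus ?thesis by linarith
qed

sublocale seq "real CARD('b)" by unfold_locales (rule n_ge1)

abbreviation "V \<equiv> Vfull blk eucl B L"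

definition Gv :: "nat \<Rightarrow> (nat \<Rightarrow> 'b) \<Rightarrow> real^'c" where
  "Gv j \<omega> = real CARD('b) *\<^sub>R blockpart blk (\<omega> j) (grad (y (Suc j) \<omega>) + \<xi> j (\<omega> j) (y (Suc j) \<omega>))"

lemma u_ismin: "ismin (u j \<omega>) (\<alpha> (Suc j) *\<^sub>R Gv j \<omega>) (u (Suc j) \<omega>)"
  using u_step unfolding ismin_def Gv_def by (simp add: inner_scaleR_left mult.assoc)

lemma bp_Gv_other: "b \<noteq> \<omega> j \<Longrightarrow> blockpart blk b (\<alpha> (Suc j) *\<^sub>R Gv j \<omega>) = 0"
  unfolding Gv_def by (simp add: bp_scale bp_other[OF bp_in])

lemma u0_entpos: "entpos u0"
  unfolding entpos_def
proof (intro allI impI)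
  fix c assume nc: "\<not> eucl (blk c)"
  define i where "i = blk c"
  define p where "p = blockpart blk i u0"
  have pr: "p \<in> rel_interior (simplex_blk blk i)" using u0_relint nc by (simp add: p_def i_def)
  then obtain e where e: "e > 0" "ball p e \<inter> affine hull (simplex_blk blk i) \<subseteq> simplex_blk blk i"
    by (auto simp: mem_rel_interior_ball)
  have pS: "p \<in> simplex_blk blk i" using pr rel_interior_subset by blast
  define ec :: "real^'c" where "ec = (\<chi> d. if d = c then 1 else 0)"
  have ecS: "ec \<in> simplex_blk blk i"
  proof -
    have "(\<Sum>d\<in>{d. blk d = i}. ec $ d) = (\<Sum>d\<in>{d. blk d = i}. if d = c then 1 else 0)" by (simp add: ec_def)
    also have "\<dots> = 1" by (simp add: i_def)
    finally show ?thesis by (auto simp: simplex_blk_def blkspace_def ec_def i_def)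
  qed
  show "u0 $ c > 0"
  proof (rule ccontr)
    assume "\<not> u0 $ c > 0"
    moreover have "u0 $ c \<ge> 0" using Q_ent(1)[OF u0_Q nc[folded i_def]] i_def by simp
    ultimately have pc: "p $ c = 0" by (simp add: p_def i_def)
    define t where "t = e / (2 * (norm (p - ec) + 1))"
    have "2 * (norm (p - ec) + 1) > (0::real)" by (smt (verit) norm_ge_zero)
    hence tp: "t > 0" using e unfolding t_def by (intro divide_pos_pos)
    define q where "q = (1 + t) *\<^sub>R p + (- t) *\<^sub>R ec"
    have "q \<in> affine hull (simplex_blk blk i)"
      unfolding q_def using pS ecS
      by (intro mem_affine[OF affine_affine_hull]) (auto intro: hull_inc)
    moreover have "q \<in> ball p e"
    proof -
      have "p - q = t *\<^sub>R (ec - p)" by (simp add: q_def algebra_simps)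
      hence "dist p q = t * norm (ec - p)" using tp by (simp add: dist_norm)
      hence "dist p q = t * norm (p - ec)" by (simp add: norm_minus_commute)
      also have "\<dots> < e"
      proof -
        have "t * norm (p - ec) = e * (norm (p - ec) / (2 * (norm (p - ec) + 1)))" by (simp add: t_def)
        also have "\<dots> < e * 1"
        proof (intro mult_strict_left_mono)
          have "norm (p - ec) < 2 * (norm (p - ec) + 1)" by (smt (verit) norm_ge_zero)
          thus "norm (p - ec) / (2 * (norm (p - ec) + 1)) < 1" by (smt (verit) norm_ge_zero divide_less_eq_1)
        qed (use e in auto)
        finally show ?thesis by simp
      qed
      finally show ?thesis by simp
    qed
    ultimately have "q \<in> simplex_blk blk i" using e by blast
    hence "q $ c \<ge> 0" by (simp add: simplex_blk_def)
    moreover have "q $ c = - t" using pc by (simp add: q_def ec_def)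
    ultimately show False using tp by simp
  qed
qed

lemma xs_comp: "x (Suc j) \<omega> $ c = (\<alpha> (Suc j) * u j \<omega> $ c + A j * x j \<omega> $ c) / A (Suc j)
   + real CARD('b) * \<alpha> (Suc j) / A (Suc j) * (u (Suc j) \<omega> $ c - u j \<omega> $ c)"
proof -
  have "x (Suc j) \<omega> $ c = y (Suc j) \<omega> $ c + real CARD('b) * \<alpha> (Suc j) / A (Suc j) * (u (Suc j) \<omega> $ c - u j \<omega> $ c)"
    using x_step by simp
  moreover have "y (Suc j) \<omega> $ c = (\<alpha> (Suc j) * u j \<omega> $ c + A j * x j \<omega> $ c) / A (Suc j)"
    using y_step by simp
  ultimately show ?thesis by simp
qed

lemma ys_comp: "y (Suc j) \<omega> = (\<alpha> (Suc j) / A (Suc j)) *\<^sub>R u j \<omega> + (A j / A (Suc j)) *\<^sub>R x j \<omega>"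
  using y_step by (simp add: scaleR_add_right)

lemma ys_Q: "u j \<omega> \<in> Q \<Longrightarrow> x j \<omega> \<in> Q \<Longrightarrow> y (Suc j) \<omega> \<in> Q"
proof -
  assume uQ: "u j \<omega> \<in> Q" and xQ: "x j \<omega> \<in> Q"
  have p: "A (Suc j) > 0" by (rule A_pos)
  have s: "\<alpha> (Suc j) / A (Suc j) + A j / A (Suc j) = 1"
    using p A_Suc[of j] by (simp add: add_divide_distrib[symmetric])
  show ?thesis unfolding ys_comp
    using p alpha_pos[of j] A_nonneg[of j] s by (intro Q_conv uQ xQ) auto
qed

lemma nalpha_le: "real CARD('b) * \<alpha> (Suc j) \<le> A (Suc j)"
proof -
  have "1 \<le> real CARD('b) * \<alpha> (Suc j)" by (rule rho_alpha)
  hence "real CARD('b) * \<alpha> (Suc j) * 1 \<le> real CARD('b) * \<alpha> (Suc j) * (real CARD('b) * \<alpha> (Suc j))"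
    using alpha_pos[of j] n_ge1 by (intro mult_left_mono) auto
  thus ?thesis using A_eq[of j] by (simp add: power2_eq_square algebra_simps)
qed

lemma alg1: "(A1::real) \<noteq> 0 \<Longrightarrow> (a * U + A0 * (\<theta> * U + (1 - \<theta>) * P)) / A1 + N * a / A1 * (U' - U)
   = (N * a * U' + ((A0 * \<theta> - (N - 1) * a) * U + A0 * (1 - \<theta>) * P)) / A1"
  by (simp add: field_simps)

lemma alg2: "(m0::real) > 0 \<Longrightarrow> A1 > 0 \<Longrightarrow> m0 / A1 * ((c1 / m0) * U + (c2 / m0) * P) = (c1 * U + c2 * P) / A1"
  by (simp add: field_simps)

lemma alg3: "(A1::real) > 0 \<Longrightarrow> 1 - X / A1 = (A1 - X) / A1"
  by (simp add: field_simps)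

lemma alg4: "((X::real) * U' + Y) / A1 = X / A1 * U' + Y / A1"
  by (simp add: add_divide_distrib)

lemma alg5: "(A1::real) > 0 \<Longrightarrow> N * a = A1 \<Longrightarrow> A0 * \<theta> - (N - 1) * a = 0 \<Longrightarrow> A0 * (1 - \<theta>) = 0 \<Longrightarrow>
  (a * U + A0 * (\<theta> * U + (1 - \<theta>) * P)) / A1 + N * a / A1 * (U' - U) = U'"
proof -
  assume h: "A1 > 0" "N * a = A1" "A0 * \<theta> - (N - 1) * a = 0" "A0 * (1 - \<theta>) = 0"
  have "a * U + A0 * (\<theta> * U + (1 - \<theta>) * P) + N * a * (U' - U) = (A0 * \<theta> - (N - 1) * a) * U + A0 * (1 - \<theta>) * P + N * a * U'"
    by (simp add: algebra_simps)
  also have "\<dots> = A1 * U'" using h by simp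
  finally have e: "a * U + A0 * (\<theta> * U + (1 - \<theta>) * P) + N * a * (U' - U) = A1 * U'" .
  have "(a * U + A0 * (\<theta> * U + (1 - \<theta>) * P)) / A1 + N * a / A1 * (U' - U) = (a * U + A0 * (\<theta> * U + (1 - \<theta>) * P) + N * a * (U' - U)) / A1"
    by (simp add: add_divide_distrib)
  also have "\<dots> = U'" unfolding e using h by simp
  finally show ?thesis .
qed

lemma inv_step:
  assumes uQ: "u j \<omega> \<in> Q" and eu: "entpos (u j \<omega>)" and pQ: "p \<in> Q"
    and rep: "blockpart blk b (x j \<omega>) = blockpart blk b (\<theta> *\<^sub>R u j \<omega> + (1 - \<theta>) *\<^sub>R p)"
    and th: "0 \<le> \<theta>" "\<theta> \<le> 1" "(real CARD('b) - 1) * \<alpha> (Suc j) \<le> A j * \<theta>"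
  shows "\<exists>p' \<theta>'. p' \<in> Q \<and> 0 \<le> \<theta>' \<and> \<theta>' \<le> 1 \<and> (real CARD('b) - 1) * \<alpha> (Suc (Suc j)) \<le> A (Suc j) * \<theta>' \<and>
     blockpart blk b (x (Suc j) \<omega>) = blockpart blk b (\<theta>' *\<^sub>R u (Suc j) \<omega> + (1 - \<theta>') *\<^sub>R p')"
proof -
  define N where "N = real CARD('b)"
  define a where "a = \<alpha> (Suc j)"
  define A0 where "A0 = A j"
  define A1 where "A1 = A (Suc j)"
  have A1e: "A1 = A0 + a" by (simp add: A1_def A0_def a_def A_Suc)
  have A1p: "A1 > 0" by (simp add: A1_def A_pos)
  have ap: "a > 0" by (simp add: a_def alpha_pos)
  have A0n: "A0 \<ge> 0" by (simp add: A0_def A_nonneg)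
  have Na: "N * a \<le> A1" by (simp add: N_def a_def A1_def nalpha_le)
  have ratio: "(N - 1) * \<alpha> (Suc (Suc j)) \<le> N * a" by (simp add: N_def a_def alpha_ratio)
  have th3: "(N - 1) * a \<le> A0 * \<theta>" using th(3) by (simp add: N_def a_def A0_def)
  have N1: "N \<ge> 1" using n_ge1 by (simp add: N_def)
  have m: "ismin (u j \<omega>) (\<alpha> (Suc j) *\<^sub>R Gv j \<omega>) (u (Suc j) \<omega>)" by (rule u_ismin)
  have u'Q: "u (Suc j) \<omega> \<in> Q" using m by (simp add: ismin_def)
  have xc: "x j \<omega> $ c = \<theta> * u j \<omega> $ c + (1 - \<theta>) * p $ c" if "blk c = b" for c
    using arg_cong[OF rep, of "\<lambda>v. v $ c"] that by simp
  have x'c: "x (Suc j) \<omega> $ c = (a * u j \<omega> $ c + A0 * x j \<omega> $ c) / A1 + N * a / A1 * (u (Suc j) \<omega> $ c - u j \<omega> $ c)" for c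
    by (simp add: xs_comp a_def A0_def A1_def N_def)
  show ?thesis
  proof (cases "b = \<omega> j")
    case False
    have same: "u (Suc j) \<omega> $ c = u j \<omega> $ c" if "blk c = b" for c
      using arg_cong[OF other_blocks[OF uQ eu m bp_Gv_other[of b \<omega> j, OF False]], of "\<lambda>v. v $ c"] that by simp
    define \<theta>' where "\<theta>' = (a + A0 * \<theta>) / A1"
    have eq: "blockpart blk b (x (Suc j) \<omega>) = blockpart blk b (\<theta>' *\<^sub>R u (Suc j) \<omega> + (1 - \<theta>') *\<^sub>R p)"
    proof -
      have h1: "1 - \<theta>' = A0 * (1 - \<theta>) / A1" using A1p A1e by (simp add: \<theta>'_def field_simps)
      have "x (Suc j) \<omega> $ c = \<theta>' * u (Suc j) \<omega> $ c + (1 - \<theta>') * p $ c" if "blk c = b" for c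
        unfolding x'c xc[OF that] same[OF that] h1 using A1p by (simp add: \<theta>'_def field_simps)
      thus ?thesis by (simp add: vec_eq_iff)
    qed
    show ?thesis
    proof (intro exI conjI)
      show "0 \<le> \<theta>'" unfolding \<theta>'_def using ap A0n th A1p by (intro divide_nonneg_pos) auto
      show "\<theta>' \<le> 1" unfolding \<theta>'_def using A1p A1e th A0n by (simp add: divide_le_eq_1) (smt (verit) mult_left_le)
      have "A1 * \<theta>' = a + A0 * \<theta>" unfolding \<theta>'_def using A1p by simp
      thus "(real CARD('b) - 1) * \<alpha> (Suc (Suc j)) \<le> A (Suc j) * \<theta>'"
      proof -
        have e: "real CARD('b) * a = (real CARD('b) - 1) * a + a" by (simp add: algebra_simps)
        show ?thesis using ratio th3 \<open>A1 * \<theta>' = a + A0 * \<theta>\<close> e by (simp add: A1_def N_def)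
      qed
    qed (use pQ eq in auto)
  next
    case True
    define m0 where "m0 = A1 - N * a"
    have m0n: "m0 \<ge> 0" using Na by (simp add: m0_def)
    define \<theta>' where "\<theta>' = N * a / A1"
    define p' where "p' = (if m0 > 0 then ((A0 * \<theta> - (N - 1) * a) / m0) *\<^sub>R u j \<omega> + (A0 * (1 - \<theta>) / m0) *\<^sub>R p else u j \<omega>)"
    have p'Q: "p' \<in> Q"
    proof (cases "m0 > 0")
      case True
      have "((A0 * \<theta> - (N - 1) * a) / m0) *\<^sub>R u j \<omega> + (A0 * (1 - \<theta>) / m0) *\<^sub>R p \<in> Q"
      proof (intro Q_conv uQ pQ)
        show "0 \<le> (A0 * \<theta> - (N - 1) * a) / m0" using True th3 by simp
        show "0 \<le> A0 * (1 - \<theta>) / m0" using True th A0n by simp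
        have "A0 * \<theta> - (N - 1) * a + A0 * (1 - \<theta>) = m0" using A1e by (simp add: m0_def algebra_simps)
        thus "(A0 * \<theta> - (N - 1) * a) / m0 + A0 * (1 - \<theta>) / m0 = 1"
          using True by (simp add: add_divide_distrib[symmetric])
      qed
      thus ?thesis using True by (simp add: p'_def)
    qed (use uQ in \<open>simp add: p'_def\<close>)
    have eq: "blockpart blk b (x (Suc j) \<omega>) = blockpart blk b (\<theta>' *\<^sub>R u (Suc j) \<omega> + (1 - \<theta>') *\<^sub>R p')"
    proof -
      have "x (Suc j) \<omega> $ c = \<theta>' * u (Suc j) \<omega> $ c + (1 - \<theta>') * p' $ c" if "blk c = b" for c
      proof (cases "m0 > 0")
        case True
        have h1: "1 - \<theta>' = m0 / A1" unfolding \<theta>'_def m0_def by (rule alg3[OF A1p])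
        have h2: "m0 / A1 * p' $ c = ((A0 * \<theta> - (N - 1) * a) * u j \<omega> $ c + A0 * (1 - \<theta>) * p $ c) / A1"
          using True A1p alg2[of m0 A1 "A0 * \<theta> - (N - 1) * a" "u j \<omega> $ c" "A0 * (1 - \<theta>)" "p $ c"]
          by (simp add: p'_def)
        have "x (Suc j) \<omega> $ c = (N * a * u (Suc j) \<omega> $ c + ((A0 * \<theta> - (N - 1) * a) * u j \<omega> $ c + A0 * (1 - \<theta>) * p $ c)) / A1"
          unfolding x'c xc[OF that] using A1p by (rule alg1[OF less_imp_neq[symmetric]])
        also have "\<dots> = \<theta>' * u (Suc j) \<omega> $ c + m0 / A1 * p' $ c"
          unfolding h2 \<theta>'_def by (rule alg4)
        finally show ?thesis unfolding h1 .
      next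
        case False
        hence m00: "m0 = 0" using m0n by simp
        have s0: "(A0 * \<theta> - (N - 1) * a) + A0 * (1 - \<theta>) = m0" using A1e by (simp add: m0_def algebra_simps)
        have n1: "A0 * \<theta> - (N - 1) * a \<ge> 0" using th3 by simp
        have n2: "A0 * (1 - \<theta>) \<ge> 0" using A0n th by simp
        have e1: "A0 * \<theta> - (N - 1) * a = 0" using s0 n1 n2 m00 by linarith
        have e2: "A0 * (1 - \<theta>) = 0" using s0 n1 n2 m00 by linarith
        have NA: "N * a = A1" using m00 by (simp add: m0_def)
        have "x (Suc j) \<omega> $ c = u (Suc j) \<omega> $ c"
          unfolding x'c xc[OF that] by (rule alg5[OF A1p NA e1 e2])
        moreover have "\<theta>' = 1" using NA A1p by (simp add: \<theta>'_def)
        ultimately show ?thesis by simp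
      qed
      thus ?thesis by (simp add: vec_eq_iff)
    qed
    show ?thesis
    proof (intro exI conjI)
      show "0 \<le> \<theta>'" unfolding \<theta>'_def using ap N1 A1p by simp
      show "\<theta>' \<le> 1" unfolding \<theta>'_def using A1p Na by simp
      have "A1 * \<theta>' = N * a" unfolding \<theta>'_def using A1p by simp
      thus "(real CARD('b) - 1) * \<alpha> (Suc (Suc j)) \<le> A (Suc j) * \<theta>'"
        using ratio by (simp add: A1_def N_def)
    qed (use p'Q eq in auto)
  qed
qed

definition INV :: "nat \<Rightarrow> (nat \<Rightarrow> 'b) \<Rightarrow> bool" where
  "INV j \<omega> \<longleftrightarrow> u j \<omega> \<in> Q \<and> entpos (u j \<omega>) \<and>
    (\<forall>b. \<exists>p \<theta>. p \<in> Q \<and> 0 \<le> \<theta> \<and> \<theta> \<le> 1 \<and> (real CARD('b) - 1) * \<alpha> (Suc j) \<le> A j * \<theta> \<and>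
       blockpart blk b (x j \<omega>) = blockpart blk b (\<theta> *\<^sub>R u j \<omega> + (1 - \<theta>) *\<^sub>R p))"

lemma INV_x: assumes "INV j \<omega>" shows "x j \<omega> \<in> Q"
  unfolding Q_iff
proof
  fix b
  obtain p \<theta> where pt: "p \<in> Q" "0 \<le> \<theta>" "\<theta> \<le> 1"
    "blockpart blk b (x j \<omega>) = blockpart blk b (\<theta> *\<^sub>R u j \<omega> + (1 - \<theta>) *\<^sub>R p)"
    using assms unfolding INV_def by blast
  have "\<theta> *\<^sub>R u j \<omega> + (1 - \<theta>) *\<^sub>R p \<in> Q" using assms pt by (intro Q_conv) (auto simp: INV_def)
  hence "blockpart blk b (\<theta> *\<^sub>R u j \<omega> + (1 - \<theta>) *\<^sub>R p) \<in> Qblk blk eucl QE b" using Q_iff by blast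
  thus "blockpart blk b (x j \<omega>) \<in> Qblk blk eucl QE b" using pt(4) by simp
qed

lemma INV_all: "INV j \<omega>"
proof (induction j)
  case 0
  have "(real CARD('b) - 1) * \<alpha> (Suc 0) \<le> A 0 * 1" using alpha_ratio0 by simp
  hence "\<exists>p \<theta>. p \<in> Q \<and> 0 \<le> \<theta> \<and> \<theta> \<le> 1 \<and> (real CARD('b) - 1) * \<alpha> (Suc 0) \<le> A 0 * \<theta> \<and>
       blockpart blk b (x 0 \<omega>) = blockpart blk b (\<theta> *\<^sub>R u 0 \<omega> + (1 - \<theta>) *\<^sub>R p)" for b
    using init u0_Q by (intro exI[of _ u0] exI[of _ 1]) auto
  thus ?case unfolding INV_def using init u0_Q u0_entpos by auto
next
  case (Suc j)
  have uQ: "u j \<omega> \<in> Q" and eu: "entpos (u j \<omega>)" using Suc by (auto simp: INV_def)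
  have m: "ismin (u j \<omega>) (\<alpha> (Suc j) *\<^sub>R Gv j \<omega>) (u (Suc j) \<omega>)" by (rule u_ismin)
  have u'Q: "u (Suc j) \<omega> \<in> Q" using m by (simp add: ismin_def)
  have eu': "entpos (u (Suc j) \<omega>)" by (rule ismin_entpos[OF uQ eu m])
  have "\<forall>b. \<exists>p \<theta>. p \<in> Q \<and> 0 \<le> \<theta> \<and> \<theta> \<le> 1 \<and> (real CARD('b) - 1) * \<alpha> (Suc (Suc j)) \<le> A (Suc j) * \<theta> \<and>
       blockpart blk b (x (Suc j) \<omega>) = blockpart blk b (\<theta> *\<^sub>R u (Suc j) \<omega> + (1 - \<theta>) *\<^sub>R p)"
  proof
    fix b
    obtain p \<theta> where pt: "p \<in> Q" "0 \<le> \<theta>" "\<theta> \<le> 1" "(real CARD('b) - 1) * \<alpha> (Suc j) \<le> A j * \<theta>"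
      "blockpart blk b (x j \<omega>) = blockpart blk b (\<theta> *\<^sub>R u j \<omega> + (1 - \<theta>) *\<^sub>R p)"
      using Suc unfolding INV_def by blast
    show "\<exists>p \<theta>. p \<in> Q \<and> 0 \<le> \<theta> \<and> \<theta> \<le> 1 \<and> (real CARD('b) - 1) * \<alpha> (Suc (Suc j)) \<le> A (Suc j) * \<theta> \<and>
       blockpart blk b (x (Suc j) \<omega>) = blockpart blk b (\<theta> *\<^sub>R u (Suc j) \<omega> + (1 - \<theta>) *\<^sub>R p)"
      by (rule inv_step[OF uQ eu pt(1) pt(5) pt(2) pt(3) pt(4)])
  qed
  thus ?case unfolding INV_def using u'Q eu' by blast
qed

lemma u_Q: "u j \<omega> \<in> Q" using INV_all by (simp add: INV_def)
lemma u_entpos: "entpos (u j \<omega>)" using INV_all by (simp add: INV_def)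
lemma x_Q: "x j \<omega> \<in> Q" using INV_all by (rule INV_x)
lemma y_Q: "y (Suc j) \<omega> \<in> Q" using u_Q x_Q by (rule ys_Q)

lemma prefix: "(\<forall>j<k. \<omega> j = \<omega>' j) \<Longrightarrow> u k \<omega> = u k \<omega>' \<and> x k \<omega> = x k \<omega>'"
proof (induction k)
  case 0 thus ?case using init by simp
next
  case (Suc k)
  hence IH: "u k \<omega> = u k \<omega>'" "x k \<omega> = x k \<omega>'" and wk: "\<omega> k = \<omega>' k" by auto
  have ye: "y (Suc k) \<omega> = y (Suc k) \<omega>'" using y_step IH by simp
  have Ge: "Gv k \<omega> = Gv k \<omega>'" unfolding Gv_def using ye wk by simp
  have m1: "ismin (u k \<omega>) (\<alpha> (Suc k) *\<^sub>R Gv k \<omega>) (u (Suc k) \<omega>)" by (rule u_ismin)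
  have m2: "ismin (u k \<omega>) (\<alpha> (Suc k) *\<^sub>R Gv k \<omega>) (u (Suc k) \<omega>')"
    using u_ismin[of k \<omega>'] IH Ge by simp
  have ue: "u (Suc k) \<omega>' = u (Suc k) \<omega>" by (rule ismin_unique[OF u_Q u_entpos m1 m2])
  thus ?case using x_step ye IH by simp
qed

definition L0 :: real where "L0 = Min (range L)"

lemma L0_pos: "L0 > 0"
  unfolding L0_def using L_pos by (subst Min_gr_iff) auto

lemma L0_le: "L0 \<le> L i"
  unfolding L0_def by (rule Min_le) auto

lemma Delta_nonneg: "\<Delta> \<ge> 0"
  using noise xstar_min(1) dnorm_nonneg by (meson order_trans)

lemma d_blk: "blockpart blk (\<omega> j) (u (Suc j) \<omega> - u j \<omega>) = u (Suc j) \<omega> - u j \<omega>"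
proof -
  define d where "d = u (Suc j) \<omega> - u j \<omega>"
  have "d $ c = 0" if "blk c \<noteq> \<omega> j" for c
  proof -
    have "blockpart blk (blk c) (u (Suc j) \<omega>) = blockpart blk (blk c) (u j \<omega>)"
      using other_blocks[OF u_Q u_entpos u_ismin bp_Gv_other[of "blk c" \<omega> j]] that by simp
    from arg_cong[OF this, of "\<lambda>v. v $ c"] show ?thesis by (simp add: d_def)
  qed
  hence "blockpart blk (\<omega> j) d = d" by (auto simp: vec_eq_iff)
  thus ?thesis by (simp add: d_def)
qed

lemma step_ineq:
  fixes j :: nat and \<omega> :: "nat \<Rightarrow> 'b"
  defines "i \<equiv> \<omega> j"
  shows "A (Suc j) * f (x (Suc j) \<omega>) + V (u (Suc j) \<omega>) xstar \<le>
     A (Suc j) * f (y (Suc j) \<omega>) + real CARD('b) * \<alpha> (Suc j) * (blockpart blk i (grad (y (Suc j) \<omega>)) \<bullet> (xstar - u j \<omega>))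
     + V (u j \<omega>) xstar + real CARD('b) * \<alpha> (Suc j) * \<Delta> * sqrt (2 * V (u (Suc j) \<omega>) xstar / L0)"
proof -
  define N where "N = real CARD('b)"
  define a where "a = \<alpha> (Suc j)"
  define A1 where "A1 = A (Suc j)"
  define uu where "uu = u j \<omega>"
  define u' where "u' = u (Suc j) \<omega>"
  define yy where "yy = y (Suc j) \<omega>"
  define x' where "x' = x (Suc j) \<omega>"
  define g where "g = grad yy"
  define xi where "xi = \<xi> j i yy"
  define d where "d = u' - uu"
  have ap: "a > 0" by (simp add: a_def alpha_pos)
  have A1p: "A1 > 0" by (simp add: A1_def A_pos)
  have N1: "N \<ge> 1" using n_ge1 by (simp add: N_def)
  have A1e: "A1 = N\<^sup>2 * a\<^sup>2" by (simp add: A1_def N_def a_def A_eq)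
  have uQ: "uu \<in> Q" and u'Q: "u' \<in> Q" and yQ: "yy \<in> Q" and x'Q: "x' \<in> Q"
    by (simp_all add: uu_def u'_def yy_def x'_def u_Q y_Q x_Q)
  have eu: "entpos uu" and eu': "entpos u'" by (simp_all add: uu_def u'_def u_entpos)
  have xsQ: "xstar \<in> Q" by (rule xstar_min(1))
  have m: "ismin uu (a *\<^sub>R Gv j \<omega>) u'" unfolding uu_def u'_def a_def by (rule u_ismin)
  have Gv_eq: "a *\<^sub>R Gv j \<omega> = (a * N) *\<^sub>R blockpart blk i (g + xi)"
    by (simp add: Gv_def N_def g_def xi_def yy_def i_def)
  have TP: "V u' xstar \<le> V uu xstar - V uu u' + (a *\<^sub>R Gv j \<omega>) \<bullet> (xstar - u')"
    by (rule three_point[OF uQ eu eu' m xsQ])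
  have dB: "blockpart blk i d = d" unfolding d_def u'_def uu_def i_def by (rule d_blk)
  have db: "d \<in> blkspace blk i" using dB bp_in[of blk i d] by simp
  define c where "c = N * a / A1"
  have cp: "c \<ge> 0" using ap A1p N1 by (simp add: c_def)
  have x'e: "x' = yy + c *\<^sub>R d" unfolding x'_def yy_def c_def d_def u'_def uu_def N_def a_def A1_def
    using x_step by simp
  have DL: "f (yy + c *\<^sub>R d) \<le> f yy + g \<bullet> (c *\<^sub>R d) + L i / 2 * (bnorm blk eucl B i (c *\<^sub>R d))\<^sup>2"
    unfolding g_def
    by (rule descent[OF f_grad lipschitz yQ _ blkspace_scale[OF db]]) (use x'Q x'e in simp)
  have c2: "c\<^sup>2 * A1 = 1" using A1e A1p ap N1 by (simp add: c_def power2_eq_square field_simps)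
  have gd: "g \<bullet> d = blockpart blk i g \<bullet> d" using dB inner_bp_sym(1)[of blk i g d] by simp
  have "A1 * f x' \<le> A1 * f yy + A1 * c * (g \<bullet> d) + L i / 2 * (c\<^sup>2 * A1) * (bnorm blk eucl B i d)\<^sup>2"
  proof -
    have "A1 * f x' \<le> A1 * (f yy + g \<bullet> (c *\<^sub>R d) + L i / 2 * (bnorm blk eucl B i (c *\<^sub>R d))\<^sup>2)"
      using DL A1p x'e by (intro mult_left_mono) auto
    thus ?thesis using cp by (simp add: bnorm_scale power_mult_distrib algebra_simps)
  qed
  also have "A1 * c = N * a" using A1p by (simp add: c_def)
  finally have D2: "A1 * f x' \<le> A1 * f yy + N * a * (blockpart blk i g \<bullet> d) + L i / 2 * (bnorm blk eucl B i d)\<^sup>2"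
    unfolding c2 gd by simp
  have SCu: "V uu u' \<ge> L i * (bnorm blk eucl B i d)\<^sup>2 / 2" unfolding d_def by (rule Vfull_ge[OF u'Q uQ eu])
  define S where "S = sqrt (2 * V u' xstar / L0)"
  have bS: "bnorm blk eucl B i (xstar - u') \<le> S"
  proof -
    have Vg: "V u' xstar \<ge> L i * (bnorm blk eucl B i (xstar - u'))\<^sup>2 / 2" by (rule Vfull_ge[OF xsQ u'Q eu'])
    have V0: "V u' xstar \<ge> 0" by (rule Vfull_nonneg[OF xsQ u'Q eu'])
    have Li: "L i > 0" using L_pos by simp
    have "(bnorm blk eucl B i (xstar - u'))\<^sup>2 \<le> 2 * V u' xstar / L i" using Vg Li by (simp add: field_simps)
    also have "\<dots> \<le> 2 * V u' xstar / L0" using V0 L0_pos L0_le[of i] by (intro divide_left_mono) auto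
    finally have "sqrt ((bnorm blk eucl B i (xstar - u'))\<^sup>2) \<le> S" unfolding S_def by (rule real_sqrt_le_mono)
    thus ?thesis using bnorm_nonneg by simp
  qed
  have NZ: "blockpart blk i xi \<bullet> (xstar - u') \<le> \<Delta> * S"
  proof -
    have "blockpart blk i xi \<bullet> (xstar - u') \<le> dnorm blk eucl B i xi * bnorm blk eucl B i (xstar - u')" by (rule dnorm_ineq)
    also have "\<dots> \<le> \<Delta> * bnorm blk eucl B i (xstar - u')"
      using noise yQ bnorm_nonneg by (intro mult_right_mono) (auto simp: xi_def)
    also have "\<dots> \<le> \<Delta> * S" using bS Delta_nonneg by (intro mult_left_mono)
    finally show ?thesis .
  qed
  have Gx: "(a *\<^sub>R Gv j \<omega>) \<bullet> (xstar - u') = N * a * (blockpart blk i g \<bullet> (xstar - u')) + N * a * (blockpart blk i xi \<bullet> (xstar - u'))"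
    unfolding Gv_eq by (simp add: bp_add inner_add_left algebra_simps)
  have NaS: "N * a * (blockpart blk i xi \<bullet> (xstar - u')) \<le> N * a * (\<Delta> * S)"
    using NZ ap N1 by (intro mult_left_mono) auto
  have comb: "blockpart blk i g \<bullet> d + blockpart blk i g \<bullet> (xstar - u') = blockpart blk i g \<bullet> (xstar - uu)"
    by (simp add: d_def inner_diff_right)
  have "A1 * f x' + V u' xstar \<le> A1 * f yy + N * a * (blockpart blk i g \<bullet> d + blockpart blk i g \<bullet> (xstar - u')) + V uu xstar + N * a * (\<Delta> * S)"
    using D2 TP SCu Gx NaS by (simp add: algebra_simps)
  thus ?thesis unfolding comb
    by (simp add: A1_def x'_def u'_def yy_def N_def a_def g_def uu_def S_def algebra_simps)
qed

definition Phi :: "nat \<Rightarrow> (nat \<Rightarrow> 'b) \<Rightarrow> real" where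
  "Phi k \<omega> = A k * (f (x k \<omega>) - f xstar) + V (u k \<omega>) xstar"

definition Sq :: "nat \<Rightarrow> (nat \<Rightarrow> 'b) \<Rightarrow> real" where
  "Sq k \<omega> = sqrt (2 * V (u k \<omega>) xstar / L0)"

lemma V_nonneg_k: "V (u k \<omega>) xstar \<ge> 0"
  by (rule Vfull_nonneg[OF xstar_min(1) u_Q u_entpos])

lemma V_le_Phi: "V (u k \<omega>) xstar \<le> Phi k \<omega>"
proof -
  have "f (x k \<omega>) - f xstar \<ge> 0" using xstar_min(2) x_Q by auto
  hence "A k * (f (x k \<omega>) - f xstar) \<ge> 0" using A_nonneg by simp
  thus ?thesis by (simp add: Phi_def)
qed

lemma avg_step:
  "(\<Sum>i\<in>UNIV. Phi (Suc j) ((fun_upd \<omega> j i))) / real CARD('b) \<le> Phi j \<omega> + \<alpha> (Suc j) * \<Delta> * (\<Sum>i\<in>UNIV. Sq (Suc j) ((fun_upd \<omega> j i)))"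
proof -
  define N where "N = real CARD('b)"
  define a where "a = \<alpha> (Suc j)"
  define A0 where "A0 = A j"
  define A1 where "A1 = A (Suc j)"
  define uu where "uu = u j \<omega>"
  define xx where "xx = x j \<omega>"
  define yy where "yy = y (Suc j) \<omega>"
  define g where "g = grad yy"
  define w where "w = xstar - uu"
  define K where "K = A1 * f yy + V uu xstar - A1 * f xstar"
  have N1: "N \<ge> 1" using n_ge1 by (simp add: N_def)
  have pre: "u j ((fun_upd \<omega> j i)) = uu \<and> x j ((fun_upd \<omega> j i)) = xx" for i
    unfolding uu_def xx_def by (rule prefix) simp
  have ypre: "y (Suc j) ((fun_upd \<omega> j i)) = yy" for i using y_step pre[of i] by (simp add: yy_def uu_def xx_def)
  have each: "Phi (Suc j) ((fun_upd \<omega> j i)) \<le> K + N * a * (blockpart blk i g \<bullet> w) + N * a * \<Delta> * Sq (Suc j) ((fun_upd \<omega> j i))" for i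
    using step_ineq[of j "fun_upd \<omega> j i"] pre[of i] ypre[of i]
    by (simp add: Phi_def K_def N_def a_def A1_def g_def w_def Sq_def algebra_simps)
  have "(\<Sum>i\<in>UNIV. Phi (Suc j) ((fun_upd \<omega> j i))) \<le> (\<Sum>i\<in>UNIV. K + N * a * (blockpart blk i g \<bullet> w) + N * a * \<Delta> * Sq (Suc j) ((fun_upd \<omega> j i)))"
    by (rule sum_mono) (rule each)
  also have "\<dots> = N * K + N * a * (g \<bullet> w) + N * a * \<Delta> * (\<Sum>i\<in>UNIV. Sq (Suc j) ((fun_upd \<omega> j i)))"
  proof -
    have "(\<Sum>i\<in>UNIV. blockpart blk i g \<bullet> w) = g \<bullet> w"
    proof -
      have "(\<Sum>i\<in>UNIV. blockpart blk i g \<bullet> w) = (\<Sum>i\<in>UNIV. blockpart blk i g) \<bullet> w"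
        by (rule inner_sum_left[symmetric])
      also have "\<dots> = g \<bullet> w" by (subst bp_sum) (rule refl)
      finally show ?thesis .
    qed
    thus ?thesis by (simp add: sum.distrib sum_distrib_left[symmetric] N_def)
  qed
  finally have s1: "(\<Sum>i\<in>UNIV. Phi (Suc j) ((fun_upd \<omega> j i))) / N \<le> K + a * (g \<bullet> w) + a * \<Delta> * (\<Sum>i\<in>UNIV. Sq (Suc j) ((fun_upd \<omega> j i)))"
    using N1 by (simp add: divide_le_eq algebra_simps)
  have A1e: "A1 = A0 + a" by (simp add: A1_def A0_def a_def A_Suc)
  have A1p: "A1 > 0" by (simp add: A1_def A_pos)
  have yeq: "A1 *\<^sub>R yy = a *\<^sub>R uu + A0 *\<^sub>R xx"
    using y_step A1p by (simp add: yy_def uu_def xx_def a_def A0_def A1_def)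
  have g1: "f xstar \<ge> f yy + g \<bullet> (xstar - yy)" unfolding g_def by (rule grad_ineq[OF f_convex f_grad])
  have g2: "f xx \<ge> f yy + g \<bullet> (xx - yy)" unfolding g_def by (rule grad_ineq[OF f_convex f_grad])
  have ap: "a \<ge> 0" using alpha_pos by (simp add: a_def less_imp_le)
  have A0n: "A0 \<ge> 0" by (simp add: A0_def A_nonneg)
  have "a * f xstar + A0 * f xx \<ge> a * (f yy + g \<bullet> (xstar - yy)) + A0 * (f yy + g \<bullet> (xx - yy))"
    using g1 g2 ap A0n by (intro add_mono mult_left_mono) auto
  also have "a * (f yy + g \<bullet> (xstar - yy)) + A0 * (f yy + g \<bullet> (xx - yy)) = A1 * f yy + g \<bullet> (a *\<^sub>R xstar + A0 *\<^sub>R xx - A1 *\<^sub>R yy)"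
    using A1e by (simp add: inner_diff_right algebra_simps)
  also have "a *\<^sub>R xstar + A0 *\<^sub>R xx - A1 *\<^sub>R yy = a *\<^sub>R w" unfolding yeq w_def by (simp add: algebra_simps)
  finally have cvx: "A1 * f yy + a * (g \<bullet> w) \<le> a * f xstar + A0 * f xx" by simp
  have "K + a * (g \<bullet> w) \<le> Phi j \<omega>"
    using cvx A1e by (simp add: K_def Phi_def A0_def xx_def uu_def algebra_simps)
  thus ?thesis using s1 by (simp add: N_def a_def)
qed

lemma A_mono: "m \<le> k \<Longrightarrow> A m \<le> A k"
proof (induction k)
  case (Suc k)
  thus ?case using alpha_pos[of k] A_Suc[of k] by (cases "m = Suc k") auto
qed simp

definition aa :: "nat \<Rightarrow> real" where "aa k = EE k (Phi k)"

lemma Phi_nonneg: "Phi k \<omega> \<ge> 0" using V_le_Phi V_nonneg_k order_trans by blast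

lemma aa_nonneg: "aa k \<ge> 0"
  unfolding aa_def using E_mono[of "\<lambda>_. 0" "Phi k" k] Phi_nonneg E_const[of k 0] by simp

lemma aa0: "aa 0 = (1 - 1 / real CARD('b)) * (f u0 - f xstar) + V u0 xstar"
  unfolding aa_def E_0 Phi_def using init by simp

lemma aa_step: "aa (Suc j) \<le> aa j + real CARD('b) * \<alpha> (Suc j) * \<Delta> * sqrt (2 / L0) * sqrt (aa (Suc j))"
proof -
  define N where "N = real CARD('b)"
  have N1: "N \<ge> 1" using n_ge1 by (simp add: N_def)
  have "aa (Suc j) = (\<Sum>i\<in>UNIV. EE j (\<lambda>\<omega>. Phi (Suc j) (fun_upd \<omega> j i))) / N"
    unfolding aa_def N_def by (rule E_step)
  also have "\<dots> = EE j (\<lambda>\<omega>. (1 / N) * (\<Sum>i\<in>UNIV. Phi (Suc j) (fun_upd \<omega> j i)))"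
    by (simp add: E_sum)
  also have "\<dots> \<le> EE j (\<lambda>\<omega>. Phi j \<omega> + \<alpha> (Suc j) * \<Delta> * (\<Sum>i\<in>UNIV. Sq (Suc j) (fun_upd \<omega> j i)))"
    using avg_step by (intro E_mono) (simp add: N_def)
  also have "\<dots> = aa j + \<alpha> (Suc j) * \<Delta> * (\<Sum>i\<in>UNIV. EE j (\<lambda>\<omega>. Sq (Suc j) (fun_upd \<omega> j i)))"
    by (simp add: E_add E_sum aa_def)
  also have "(\<Sum>i\<in>UNIV. EE j (\<lambda>\<omega>. Sq (Suc j) (fun_upd \<omega> j i))) = N * EE (Suc j) (Sq (Suc j))"
    using E_step[of j "Sq (Suc j)"] N1 by (simp add: N_def)
  finally have r1: "aa (Suc j) \<le> aa j + \<alpha> (Suc j) * \<Delta> * (N * EE (Suc j) (Sq (Suc j)))" .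
  have "EE (Suc j) (Sq (Suc j)) \<le> sqrt (EE (Suc j) (\<lambda>\<omega>. 2 * V (u (Suc j) \<omega>) xstar / L0))"
    unfolding Sq_def using V_nonneg_k L0_pos by (intro jensen_sqrt) simp
  also have "EE (Suc j) (\<lambda>\<omega>. 2 * V (u (Suc j) \<omega>) xstar / L0) = (2 / L0) * EE (Suc j) (\<lambda>\<omega>. V (u (Suc j) \<omega>) xstar)"
    by simp
  also have "\<dots> \<le> (2 / L0) * aa (Suc j)"
    unfolding aa_def using L0_pos V_le_Phi by (intro mult_left_mono E_mono) auto
  finally have "EE (Suc j) (Sq (Suc j)) \<le> sqrt (2 / L0) * sqrt (aa (Suc j))"
    by (simp add: real_sqrt_mult[symmetric])
  hence "\<alpha> (Suc j) * \<Delta> * (N * EE (Suc j) (Sq (Suc j))) \<le> \<alpha> (Suc j) * \<Delta> * (N * (sqrt (2 / L0) * sqrt (aa (Suc j))))"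
    using alpha_pos[of j] Delta_nonneg N1 by (intro mult_left_mono) auto
  with r1 show ?thesis by (simp add: N_def algebra_simps)
qed

lemma aa_tele: "aa m \<le> aa 0 + real CARD('b) * \<Delta> * sqrt (2 / L0) * (\<Sum>j\<in>{1..m}. \<alpha> j * sqrt (aa j))"
proof (induction m)
  case 0 thus ?case by simp
next
  case (Suc m)
  have "aa (Suc m) \<le> aa m + real CARD('b) * \<alpha> (Suc m) * \<Delta> * sqrt (2 / L0) * sqrt (aa (Suc m))"
    by (rule aa_step)
  also have "\<dots> \<le> aa 0 + real CARD('b) * \<Delta> * sqrt (2 / L0) * (\<Sum>j\<in>{1..m}. \<alpha> j * sqrt (aa j)) + real CARD('b) * \<alpha> (Suc m) * \<Delta> * sqrt (2 / L0) * sqrt (aa (Suc m))"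
    using Suc by simp
  also have "\<dots> = aa 0 + real CARD('b) * \<Delta> * sqrt (2 / L0) * (\<Sum>j\<in>{1..Suc m}. \<alpha> j * sqrt (aa j))"
    by (simp add: sum.cl_ivl_Suc algebra_simps)
  finally show ?case .
qed

lemma Ef_bound: "A k * (EE k (\<lambda>\<omega>. f (x k \<omega>)) - f xstar) \<le> aa k"
proof -
  have "aa k = EE k (\<lambda>\<omega>. A k * f (x k \<omega>) + (V (u k \<omega>) xstar - A k * f xstar))"
    unfolding aa_def Phi_def by (simp add: algebra_simps)
  also have "\<dots> = A k * EE k (\<lambda>\<omega>. f (x k \<omega>)) + (EE k (\<lambda>\<omega>. V (u k \<omega>) xstar) - A k * f xstar)"
    by (simp add: E_add E_const PP_int)
  finally have e: "aa k = A k * EE k (\<lambda>\<omega>. f (x k \<omega>)) + (EE k (\<lambda>\<omega>. V (u k \<omega>) xstar) - A k * f xstar)" .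
  have "EE k (\<lambda>\<omega>. V (u k \<omega>) xstar) \<ge> 0"
    using E_mono[of "\<lambda>_. 0" "\<lambda>\<omega>. V (u k \<omega>) xstar" k] V_nonneg_k E_const[of k 0] by simp
  thus ?thesis using e by (simp add: algebra_simps)
qed

lemma M_bound:
  "\<exists>M. aa k \<le> M \<and> M \<le> aa 0 + real CARD('b) * \<Delta> * sqrt (2 / L0) * A k * sqrt M \<and> M \<ge> 0"
proof -
  define M where "M = Max (aa ` {..k})"
  have fin: "finite (aa ` {..k})" "aa ` {..k} \<noteq> {}" by auto
  have le: "aa j \<le> M" if "j \<le> k" for j unfolding M_def using fin that by (intro Max_ge) auto
  have "M \<in> aa ` {..k}" unfolding M_def by (rule Max_in[OF fin])
  then obtain m where m: "m \<le> k" "M = aa m" by auto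
  define c where "c = real CARD('b) * \<Delta> * sqrt (2 / L0)"
  have c0: "c \<ge> 0" using Delta_nonneg L0_pos by (simp add: c_def)
  have "(\<Sum>j\<in>{1..m}. \<alpha> j * sqrt (aa j)) \<le> (\<Sum>j\<in>{1..m}. \<alpha> j * sqrt M)"
  proof (rule sum_mono)
    fix j assume j: "j \<in> {1..m}"
    then obtain j' where j': "j = Suc j'" by (cases j) auto
    have "\<alpha> j \<ge> 0" using alpha_pos[of j'] j' by simp
    moreover have "sqrt (aa j) \<le> sqrt M" using le[of j] j m by auto
    ultimately show "\<alpha> j * sqrt (aa j) \<le> \<alpha> j * sqrt M" by (intro mult_left_mono)
  qed
  also have "\<dots> = (A m - A 0) * sqrt M" using sum_alpha[of m] by (simp add: sum_distrib_right[symmetric])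
  also have "\<dots> \<le> A k * sqrt M"
  proof (intro mult_right_mono)
    have "A 0 \<ge> 0" by (rule A_nonneg)
    thus "A m - A 0 \<le> A k" using A_mono[OF m(1)] by linarith
    show "sqrt M \<ge> 0" using m aa_nonneg by simp
  qed
  finally have "c * (\<Sum>j\<in>{1..m}. \<alpha> j * sqrt (aa j)) \<le> c * (A k * sqrt M)" using c0 by (intro mult_left_mono)
  moreover have "aa m \<le> aa 0 + c * (\<Sum>j\<in>{1..m}. \<alpha> j * sqrt (aa j))" using aa_tele by (simp add: c_def)
  ultimately have "M \<le> aa 0 + c * A k * sqrt M" using m by (simp add: algebra_simps)
  thus ?thesis using le[of k] m aa_nonneg by (intro exI[of _ M]) (auto simp: c_def)
qed

lemma main_result:
  assumes k1: "k \<ge> 1"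
  shows "let P0sq = (1 - 1 / real CARD('b)) * (f u0 - f xstar) + V u0 xstar;
             Ef = measure_pmf.expectation (Pi_pmf {..<k} undefined (\<lambda>_. pmf_of_set (UNIV :: 'b set)))
                    (\<lambda>\<omega>. f (x k \<omega>))
         in (\<Delta> \<le> sqrt P0sq * sqrt L0 / (4 * real CARD('b) * A k) \<longrightarrow>
               Ef - f xstar \<le> 6 * (real CARD('b))\<^sup>2 * P0sq / (real k - 1 + 2 * real CARD('b))\<^sup>2)
          \<and> Ef - f xstar \<le> 8 * (real CARD('b))\<^sup>2 * P0sq / (real k - 1 + 2 * real CARD('b))\<^sup>2
                          + 4 / L0 * (real k - 1 + 2 * real CARD('b))\<^sup>2 * \<Delta>\<^sup>2"
proof -
  define N where "N = real CARD('b)"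
  define P0 where "P0 = aa 0"
  define Ef where "Ef = EE k (\<lambda>\<omega>. f (x k \<omega>))"
  define K where "K = real k - 1 + 2 * N"
  have N1: "N \<ge> 1" using n_ge1 by (simp add: N_def)
  have P0e: "P0 = (1 - 1 / real CARD('b)) * (f u0 - f xstar) + V u0 xstar" by (simp add: P0_def aa0)
  have P0n: "P0 \<ge> 0" by (simp add: P0_def aa_nonneg)
  obtain M where M: "aa k \<le> M" "M \<le> P0 + N * \<Delta> * sqrt (2 / L0) * A k * sqrt M" "M \<ge> 0"
    using M_bound[of k] unfolding P0_def N_def by blast
  define b where "b = N * \<Delta> * sqrt (2 / L0) * A k"
  have b0: "b \<ge> 0" using Delta_nonneg N1 L0_pos A_nonneg[of k] by (simp add: b_def)
  have Mb: "M \<le> P0 + b * sqrt M" using M(2) by (simp add: b_def)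
  have AE: "A k * (Ef - f xstar) \<le> M" using Ef_bound[of k] M(1) by (simp add: Ef_def)
  obtain k' where k': "k = Suc k'" using k1 by (cases k) auto
  have Akp: "A k > 0" using A_pos k' by simp
  have K2N: "K \<ge> 2 * N" using k1 by (simp add: K_def)
  have Kp: "K > 0" using K2N N1 by simp
  define D where "D = K\<^sup>2 / (4 * N\<^sup>2)"
  have Dp: "D > 0" using Kp N1 by (simp add: D_def)
  have AD: "A k \<ge> D" unfolding D_def K_def N_def by (rule A_lower[OF k1])
  have AU: "A k \<le> (real k - 1 + N)\<^sup>2 / N\<^sup>2" unfolding N_def by (rule A_upper[OF k1])
  have bound_from: "Ef - f xstar \<le> R / D" if h: "A k * (Ef - f xstar) \<le> R" "R \<ge> 0" for R
  proof (cases "Ef - f xstar \<le> 0")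
    case True
    have "R / D \<ge> 0" using h(2) Dp by simp
    thus ?thesis using True by linarith
  next
    case False
    hence "D * (Ef - f xstar) \<le> A k * (Ef - f xstar)" using AD by (intro mult_right_mono) auto
    hence "D * (Ef - f xstar) \<le> R" using h(1) by linarith
    thus ?thesis using Dp by (simp add: pos_le_divide_eq mult.commute)
  qed
  have part1: "Ef - f xstar \<le> 6 * N\<^sup>2 * P0 / K\<^sup>2" if hD: "\<Delta> \<le> sqrt P0 * sqrt L0 / (4 * N * A k)"
  proof -
    have NA: "4 * N * A k > 0" using N1 Akp by simp
    have "\<Delta> * (4 * N * A k) \<le> sqrt P0 * sqrt L0" using hD NA by (simp add: pos_le_divide_eq)
    hence NAD: "N * \<Delta> * A k \<le> sqrt P0 * sqrt L0 / 4" by (simp add: algebra_simps)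
    have sq: "sqrt L0 * sqrt (2 / L0) = sqrt 2"
    proof -
      have "L0 * (2 / L0) = 2" using L0_pos by simp
      thus ?thesis by (metis real_sqrt_mult)
    qed
    have "b = (N * \<Delta> * A k) * sqrt (2 / L0)" by (simp add: b_def algebra_simps)
    also have "\<dots> \<le> (sqrt P0 * sqrt L0 / 4) * sqrt (2 / L0)" using NAD L0_pos by (intro mult_right_mono) auto
    also have "\<dots> = sqrt P0 * sqrt 2 / 4" using sq by (simp add: algebra_simps)
    also have "\<dots> \<le> 36 / 100 * sqrt P0"
    proof -
      have "sqrt 2 \<le> sqrt ((144 / 100) ^ 2)" by (intro real_sqrt_le_mono) (simp add: power2_eq_square)
      hence "sqrt 2 \<le> 144 / 100" by simp
      hence "sqrt P0 * sqrt 2 \<le> sqrt P0 * (144 / 100)" using P0n by (intro mult_left_mono) auto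
      thus ?thesis by simp
    qed
    finally have "b \<le> 36 / 100 * sqrt P0" .
    hence "M \<le> 3 / 2 * (sqrt P0)\<^sup>2" using M(3) P0n Mb by (intro alg_p1) auto
    hence "M \<le> 3 / 2 * P0" using P0n by simp
    hence "A k * (Ef - f xstar) \<le> 3 / 2 * P0" using AE by simp
    hence "Ef - f xstar \<le> (3 / 2 * P0) / D" using P0n by (intro bound_from) auto
    also have "\<dots> = 6 * N\<^sup>2 * P0 / K\<^sup>2" using N1 Kp by (simp add: D_def field_simps)
    finally show ?thesis .
  qed
  have part2: "Ef - f xstar \<le> 8 * N\<^sup>2 * P0 / K\<^sup>2 + 4 / L0 * K\<^sup>2 * \<Delta>\<^sup>2"
  proof -
    have M2: "M \<le> 2 * P0 + b\<^sup>2" using alg_p2[OF M(3) b0 Mb] .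
    have b2: "b\<^sup>2 = N\<^sup>2 * \<Delta>\<^sup>2 * (2 / L0) * (A k)\<^sup>2"
      using L0_pos by (simp add: b_def power_mult_distrib)
    have "A k * (Ef - f xstar) \<le> 2 * P0 + b\<^sup>2" using AE M2 by linarith
    hence "Ef - f xstar \<le> (2 * P0 + b\<^sup>2) / A k" using Akp by (simp add: field_simps)
    also have "\<dots> = 2 * P0 / A k + N\<^sup>2 * \<Delta>\<^sup>2 * (2 / L0) * A k"
      unfolding b2 using Akp by (simp add: add_divide_distrib power2_eq_square)
    also have "2 * P0 / A k \<le> 2 * P0 / D" using P0n Dp AD by (intro divide_left_mono) auto
    also have "2 * P0 / D = 8 * N\<^sup>2 * P0 / K\<^sup>2" using N1 Kp by (simp add: D_def field_simps)
    also have "N\<^sup>2 * \<Delta>\<^sup>2 * (2 / L0) * A k \<le> N\<^sup>2 * \<Delta>\<^sup>2 * (2 / L0) * ((real k - 1 + N)\<^sup>2 / N\<^sup>2)"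
      using AU L0_pos by (intro mult_left_mono) auto
    also have "\<dots> = 2 / L0 * (real k - 1 + N)\<^sup>2 * \<Delta>\<^sup>2" using N1 by (simp add: field_simps)
    also have "\<dots> \<le> 4 / L0 * K\<^sup>2 * \<Delta>\<^sup>2"
    proof -
      have "(real k - 1 + N)\<^sup>2 \<le> K\<^sup>2" using k1 N1 by (intro power_mono) (auto simp: K_def)
      hence "2 * (real k - 1 + N)\<^sup>2 \<le> 4 * K\<^sup>2" using zero_le_power2[of K] by linarith
      hence "2 * (real k - 1 + N)\<^sup>2 * \<Delta>\<^sup>2 / L0 \<le> 4 * K\<^sup>2 * \<Delta>\<^sup>2 / L0"
        using L0_pos by (intro divide_right_mono mult_right_mono) auto
      thus ?thesis by (simp add: algebra_simps)
    qed
    finally show ?thesis by simp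
  qed
  have "Ef = measure_pmf.expectation (Pi_pmf {..<k} undefined (\<lambda>_. pmf_of_set (UNIV :: 'b set))) (\<lambda>\<omega>. f (x k \<omega>))"
    by (simp add: Ef_def PP_def)
  thus ?thesis using part1 part2 unfolding Let_def P0e[symmetric]
    by (simp add: N_def K_def)
qed

end

theorem corollary3:
  fixes blk :: "'c::finite \<Rightarrow> 'b::finite"
    and eucl :: "'b \<Rightarrow> bool"
    and QE :: "'b \<Rightarrow> (real^'c) set"
    and B :: "'b \<Rightarrow> 'c \<Rightarrow> 'c \<Rightarrow> real"
    and f :: "real^'c \<Rightarrow> real"
    and grad :: "real^'c \<Rightarrow> real^'c"
    and L :: "'b \<Rightarrow> real"
    and xstar u0 :: "real^'c"
    and \<xi> :: "nat \<Rightarrow> 'b \<Rightarrow> real^'c \<Rightarrow> real^'c"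
    and \<Delta> :: real
    and u x y :: "nat \<Rightarrow> (nat \<Rightarrow> 'b) \<Rightarrow> real^'c"
    and k :: nat
  defines "n \<equiv> real CARD('b)"
    and "Q \<equiv> Qprod blk eucl QE"
    and "V \<equiv> Vfull blk eucl B L"
    and "A \<equiv> rstm_A (real CARD('b))"
    and "\<alpha> \<equiv> rstm_alpha (real CARD('b))"
    and "L0 \<equiv> Min (range L)"
    and "fstar \<equiv> f xstar"
  assumes blk_surj: "surj blk"
    and eucl_Q: "\<forall>i. eucl i \<longrightarrow> QE i \<subseteq> blkspace blk i \<and> closed (QE i) \<and> convex (QE i)"
    and eucl_B: "\<forall>i. eucl i \<longrightarrow> (\<forall>c d. B i c d = B i d c) \<and>
                   (\<forall>h\<in>blkspace blk i. h \<noteq> 0 \<longrightarrow>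
                      (\<Sum>c\<in>{c. blk c = i}. \<Sum>d\<in>{d. blk d = i}. B i c d * h $ c * h $ d) > 0)"
    and f_convex: "convex_on UNIV f"
    and f_grad: "\<forall>z. (f has_derivative (\<lambda>h. grad z \<bullet> h)) (at z)"
    and L_pos: "\<forall>i. L i > 0"
    and lipschitz: "\<forall>i z h. z \<in> Q \<and> h \<in> blkspace blk i \<and> z + h \<in> Q \<longrightarrow>
                      dnorm blk eucl B i (grad (z + h) - grad z) \<le> L i * bnorm blk eucl B i h"
    and xstar_min: "xstar \<in> Q" "\<forall>z\<in>Q. f xstar \<le> f z"
    and u0_Q: "u0 \<in> Q"
    and u0_relint: "\<forall>i. \<not> eucl i \<longrightarrow> blockpart blk i u0 \<in> rel_interior (simplex_blk blk i)"
    and noise: "\<forall>j i z. z \<in> Q \<longrightarrow> dnorm blk eucl B i (\<xi> j i z) \<le> \<Delta>"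
    and init: "\<forall>\<omega>. u 0 \<omega> = u0 \<and> x 0 \<omega> = u0 \<and> y 0 \<omega> = u0"
    and y_step: "\<forall>j \<omega>. y (Suc j) \<omega> = (1 / A (Suc j)) *\<^sub>R (\<alpha> (Suc j) *\<^sub>R u j \<omega> + A j *\<^sub>R x j \<omega>)"
    and u_step: "\<forall>j \<omega>. u (Suc j) \<omega> \<in> Q \<and>
                   (\<forall>z\<in>Q. V (u j \<omega>) (u (Suc j) \<omega>) + \<alpha> (Suc j) *
                            ((n *\<^sub>R blockpart blk (\<omega> j) (grad (y (Suc j) \<omega>) + \<xi> j (\<omega> j) (y (Suc j) \<omega>)))
                               \<bullet> u (Suc j) \<omega>)
                        \<le> V (u j \<omega>) z + \<alpha> (Suc j) *
                            ((n *\<^sub>R blockpart blk (\<omega> j) (grad (y (Suc j) \<omega>) + \<xi> j (\<omega> j) (y (Suc j) \<omega>)))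
                               \<bullet> z))"
    and x_step: "\<forall>j \<omega>. x (Suc j) \<omega> = y (Suc j) \<omega> + (n * \<alpha> (Suc j) / A (Suc j)) *\<^sub>R (u (Suc j) \<omega> - u j \<omega>)"
    and k_pos: "k \<ge> 1"
  shows "let P0sq = (1 - 1 / n) * (f u0 - fstar) + V u0 xstar;
             Ef = measure_pmf.expectation (Pi_pmf {..<k} undefined (\<lambda>_. pmf_of_set (UNIV :: 'b set)))
                    (\<lambda>\<omega>. f (x k \<omega>))
         in (\<Delta> \<le> sqrt P0sq * sqrt L0 / (4 * n * A k) \<longrightarrow>
               Ef - fstar \<le> 6 * n\<^sup>2 * P0sq / (real k - 1 + 2 * n)\<^sup>2)
          \<and> Ef - fstar \<le> 8 * n\<^sup>2 * P0sq / (real k - 1 + 2 * n)\<^sup>2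
                          + 4 / L0 * (real k - 1 + 2 * n)\<^sup>2 * \<Delta>\<^sup>2"
proof -
  interpret M: main blk eucl QE B L f grad xstar u0 \<xi> \<Delta> u x y
  proof unfold_locales
    show "surj blk" by (rule blk_surj)
    show "\<forall>i. eucl i \<longrightarrow> QE i \<subseteq> blkspace blk i \<and> closed (QE i) \<and> convex (QE i)" by (rule eucl_Q)
    show "\<forall>i. eucl i \<longrightarrow> (\<forall>c d. B i c d = B i d c) \<and>
                   (\<forall>h\<in>blkspace blk i. h \<noteq> 0 \<longrightarrow>
                      (\<Sum>c\<in>{c. blk c = i}. \<Sum>d\<in>{d. blk d = i}. B i c d * h $ c * h $ d) > 0)" by (rule eucl_B)
    show "\<forall>i. L i > 0" by (rule L_pos)
  qed (use f_convex f_grad lipschitz xstar_min u0_Q u0_relint noise init y_step u_step x_step in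
       \<open>simp_all add: Q_def V_def A_def \<alpha>_def n_def\<close>)
  show ?thesis
    using M.main_result[OF k_pos]
    unfolding n_def Q_def V_def A_def \<alpha>_def L0_def fstar_def M.L0_def .
qed

end
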